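(* Let $M$ be a closed surface with a triangulation $\mathcal{T}=(V,E,F)$, $V=\{v_1,\dots,v_N\}$, and let $\Phi:E\to[0,\pi)$ be a weight satisfying condition $\langle\star\rangle$ (see context). Let $R>0$ be a constant. Then there exist positive constants $a_1(\Phi,R)$, $a_2(\Phi,R)$, $a_3(\Phi,R)$, depending only on $\Phi$ and $R$, such that for every hyperbolic circle packing metric $r=(r_1,\dots,r_N)\in\mathbb{R}_{>0}^N$ with $r_i\ge R$ for all $v_i\in V$, one has $a_1\le A_i\le a_2$ for every vertex $v_i$, and $0\le B_{ij}\le a_3$ for all adjacent vertices $v_i,v_j$.
   Context: Weights: write $\Phi_{ij}=\Phi(e_{ij})$ and $I_{ij}=\cos\Phi_{ij}$. Condition $\langle\star\rangle$: for every face $\triangle_{ijk}\in F$, $I_{ij}+I_{ik}I_{jk}\ge0$, $I_{ik}+I_{ij}I_{jk}\ge0$, $I_{jk}+I_{ij}I_{ik}\ge0$. A circle packing metric is $r:V\to(0,\infty)$, $r_i=r(v_i)$ (radius of a circle centered at $v_i$). In hyperbolic background geometry the edge $e_{ij}$ gets length $l_{ij}=\cosh^{-1}(\cosh r_i\cosh r_j+\sinh r_i\sinh r_j\cos\Phi_{ij})$; under $\langle\star\rangle$ the three lengths of each face satisfy the triangle inequalities, so each face $\triangle_{ijk}$ is realized as a hyperbolic triangle; $\theta_i^{jk}\in(0,\pi)$ denotes its inner angle at $v_i$. Set $u_i=\ln\tanh(r_i/2)$ (a diffeomorphism $\mathbb{R}^N_{>0}\to\mathbb{R}^N_{<0}$)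 and regard angles and areas as functions of $u=(u_1,\dots,u_N)$. For an edge $e_{ij}$ with adjacent faces $\triangle_{ijk},\triangle_{ijl}$, define $B_{ij}=\frac{\partial\theta_i^{jk}}{\partial u_j}+\frac{\partial\theta_i^{jl}}{\partial u_j}$, and for a vertex $v_i$ define $A_i=\frac{\partial}{\partial u_i}\Big(\sum_{\triangle_{ijk}\in F}\mathrm{Area}(\triangle_{ijk})\Big)$, the sum over all faces containing $v_i$ (hyperbolic areas). *)

theory Defs
  imports "HOL-Analysis.Analysis"
begin

definition tri_edges :: "'a set set \<Rightarrow> 'a set set" where
  "tri_edges F = {e. \<exists>f\<in>F. e \<subseteq> f \<and> card e = 2}"

definition face_adj :: "'a set set \<Rightarrow> ('a set \<times> 'a set) set" where
  "face_adj F = {(f, g). f \<in> F \<and> g \<in> F \<and> card (f \<inter> g) = 2}"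

definition closed_surface_triangulation :: "'a set \<Rightarrow> 'a set set \<Rightarrow> bool" where
  "closed_surface_triangulation V F \<longleftrightarrow>
     finite V \<and> V \<noteq> {} \<and>
     (\<forall>f\<in>F. f \<subseteq> V \<and> card f = 3) \<and>
     (\<forall>v\<in>V. \<exists>f\<in>F. v \<in> f) \<and>
     (\<forall>e\<in>tri_edges F. card {f\<in>F. e \<subseteq> f} = 2) \<and>
     \<comment> \<open>vertex links are single cycles (the star of each vertex is a disk)\<close>
     (\<forall>v\<in>V. \<forall>f\<in>F. \<forall>g\<in>F. v \<in> f \<longrightarrow> v \<in> g \<longrightarrow>
        (f, g) \<in> (face_adj {h\<in>F. v \<in> h})\<^sup>*) \<and>
     \<comment> \<open>the surface is connected\<close>
     (\<forall>f\<in>F. \<forall>g\<in>F. (f, g) \<in> (face_adj F)\<^sup>*)"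

definition star_condition :: "'a set set \<Rightarrow> ('a set \<Rightarrow> real) \<Rightarrow> bool" where
  "star_condition F \<Phi> \<longleftrightarrow>
     (\<forall>f\<in>F. \<forall>i j k. f = {i, j, k} \<longrightarrow>
        cos (\<Phi> {i, j}) + cos (\<Phi> {i, k}) * cos (\<Phi> {j, k}) \<ge> 0)"

definition edge_len :: "('a set \<Rightarrow> real) \<Rightarrow> ('a \<Rightarrow> real) \<Rightarrow> 'a set \<Rightarrow> real" where
  "edge_len \<Phi> r e =
     arcosh ((\<Prod>w\<in>e. cosh (r w)) + (\<Prod>w\<in>e. sinh (r w)) * cos (\<Phi> e))"

(* inner angle at vertex v of the hyperbolic triangle realizing face f (hyperbolic law of cosines) *)
definition face_angle :: "('a set \<Rightarrow> real) \<Rightarrow> ('a \<Rightarrow> real) \<Rightarrow> 'a set \<Rightarrow> 'a \<Rightarrow> real" where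
  "face_angle \<Phi> r f v =
     arccos (((\<Prod>w\<in>f - {v}. cosh (edge_len \<Phi> r {v, w})) - cosh (edge_len \<Phi> r (f - {v})))
             / (\<Prod>w\<in>f - {v}. sinh (edge_len \<Phi> r {v, w})))"

definition face_area :: "('a set \<Rightarrow> real) \<Rightarrow> ('a \<Rightarrow> real) \<Rightarrow> 'a set \<Rightarrow> real" where
  "face_area \<Phi> r f = pi - (\<Sum>v\<in>f. face_angle \<Phi> r f v)"

definition rad_of_u :: "real \<Rightarrow> real" where
  "rad_of_u x = 2 * artanh (exp x)"

definition u_of_rad :: "real \<Rightarrow> real" where
  "u_of_rad x = ln (tanh (x / 2))"

definition angle_u :: "('a set \<Rightarrow> real) \<Rightarrow> ('a \<Rightarrow> real) \<Rightarrow> 'a set \<Rightarrow> 'a \<Rightarrow> real" where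
  "angle_u \<Phi> u f v = face_angle \<Phi> (\<lambda>w. rad_of_u (u w)) f v"

definition area_u :: "('a set \<Rightarrow> real) \<Rightarrow> ('a \<Rightarrow> real) \<Rightarrow> 'a set \<Rightarrow> real" where
  "area_u \<Phi> u f = face_area \<Phi> (\<lambda>w. rad_of_u (u w)) f"

definition B_coef :: "'a set set \<Rightarrow> ('a set \<Rightarrow> real) \<Rightarrow> ('a \<Rightarrow> real) \<Rightarrow> 'a \<Rightarrow> 'a \<Rightarrow> real" where
  "B_coef F \<Phi> u i j =
     (\<Sum>f\<in>{f\<in>F. {i, j} \<subseteq> f}. deriv (\<lambda>t. angle_u \<Phi> (u(j := t)) f i) (u j))"

definition A_coef :: "'a set set \<Rightarrow> ('a set \<Rightarrow> real) \<Rightarrow> ('a \<Rightarrow> real) \<Rightarrow> 'a \<Rightarrow> real" where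
  "A_coef F \<Phi> u i =
     deriv (\<lambda>t. \<Sum>f\<in>{f\<in>F. i \<in> f}. area_u \<Phi> (u(i := t)) f) (u i)"

end

theory Submission
  imports Defs
begin

definition "qq (t::real) = 1 + t^2"
definition "pp (t::real) = 1 - t^2"
definition "NN a b (x::real) = qq a * qq b + 4*a*b*x"
definition "EE a b (x::real) = a^2 + b^2 + 2*a*b*x"
definition "FF a b (x::real) = 1 + a^2*b^2 + 2*a*b*x"
definition "MM a b x = 4 * EE a b x * FF a b x"
definition "XX a b c x y z = NN a b x * NN a c y - NN b c z * (pp a)^2"
definition "SS a b c x y z = b*c*qq a*(y+x*z) + a*c*qq b*(z+x*y) + a*b*qq c*(1-x^2)"
definition "GG a b c x y z = (pp a*pp b*pp c)^2 + 2*NN a b x*NN a c y*NN b c z - (NN a b x*pp c)^2 - (NN a c y*pp b)^2 - (NN b c z*pp a)^2"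
definition "Cf a b c x y z = XX a b c x y z / (sqrt (MM a b x) * sqrt (MM a c y))"

lemma cross_id:
  "-(2*(((2*b*qq a + 4*a*x) * NN a c y - (2*b*qq c + 4*c*z)*(pp a)^2)) * MM a b x
     - XX a b c x y z * (4*((2*b+2*a*x)*FF a b x + EE a b x*(2*a^2*b+2*a*x)))) =
   32*a*(pp a)^2*pp b*SS a b c x y z"
  unfolding MM_def XX_def SS_def NN_def EE_def FF_def qq_def pp_def
  by algebra

lemma MX_id: "MM a b x * MM a c y - (XX a b c x y z)^2 = GG a b c x y z * (pp a)^2"
  unfolding MM_def XX_def GG_def NN_def EE_def FF_def qq_def pp_def
  by algebra

lemma X_deriv_b: "((\<lambda>t. XX a t c x y z) has_real_derivative
   ((2*b*qq a + 4*a*x) * NN a c y - (2*b*qq c + 4*c*z)*(pp a)^2)) (at b)"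
  unfolding XX_def NN_def qq_def pp_def
  by (auto intro!: derivative_eq_intros simp: algebra_simps)

lemma M_deriv_b: "((\<lambda>t. MM a t x) has_real_derivative
   (4*((2*b+2*a*x)*FF a b x + EE a b x*(2*a^2*b+2*a*x)))) (at b)"
  unfolding MM_def EE_def FF_def
  apply (rule derivative_eq_intros refl)+
  apply (simp add: power2_eq_square)
  apply algebra
  done

lemma one_minus_C_sq:
  assumes M1: "MM a b x > 0" and M2: "MM a c y > 0"
  shows "1 - (Cf a b c x y z)^2 = GG a b c x y z * (pp a)^2 / (MM a b x * MM a c y)"
proof -
  have "(Cf a b c x y z)^2 = (XX a b c x y z)^2 / (MM a b x * MM a c y)"
    using M1 M2 by (simp add: Cf_def power_divide power_mult_distrib)
  then have "1 - (Cf a b c x y z)^2 = (MM a b x * MM a c y - (XX a b c x y z)^2) / (MM a b x * MM a c y)"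
    using M1 M2 by (simp add: field_simps)
  then show ?thesis by (simp add: MX_id)
qed

lemma sqrt_one_minus_C:
  assumes M1: "MM a b x > 0" and M2: "MM a c y > 0" and G: "GG a b c x y z \<ge> 0" and pa: "pp a > 0"
  shows "sqrt (1 - (Cf a b c x y z)^2) = sqrt (GG a b c x y z) * pp a / (sqrt (MM a b x) * sqrt (MM a c y))"
proof -
  have "1 - (Cf a b c x y z)^2 = GG a b c x y z * (pp a)^2 / (MM a b x * MM a c y)"
    by (rule one_minus_C_sq[OF M1 M2])
  also have "sqrt \<dots> = sqrt (GG a b c x y z) * pp a / (sqrt (MM a b x) * sqrt (MM a c y))"
    using pa by (simp add: real_sqrt_mult real_sqrt_divide)
  finally show ?thesis .
qed

lemma C_bounds:
  assumes M1: "MM a b x > 0" and M2: "MM a c y > 0" and G: "GG a b c x y z > 0" and pa: "pp a > 0"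
  shows "-1 < Cf a b c x y z \<and> Cf a b c x y z < 1"
proof -
  have "1 - (Cf a b c x y z)^2 = GG a b c x y z * (pp a)^2 / (MM a b x * MM a c y)"
    by (rule one_minus_C_sq[OF M1 M2])
  also have "\<dots> > 0" using M1 M2 G pa by simp
  finally have "(Cf a b c x y z)^2 < 1" by simp
  then show ?thesis by (simp add: abs_square_less_1 abs_less_iff)
qed

lemma D_cross:
  assumes M1: "MM a b x > 0" and M2: "MM a c y > 0" and G: "GG a b c x y z > 0"
    and pa: "pp a > 0"
  shows "((\<lambda>t. arccos (Cf a t c x y z)) has_real_derivative
     (16*a*pp a*pp b*SS a b c x y z / (MM a b x * sqrt (GG a b c x y z)))) (at b)"
proof -
  define Xb where "Xb = (2*b*qq a + 4*a*x) * NN a c y - (2*b*qq c + 4*c*z)*(pp a)^2"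
  define Mb where "Mb = 4*((2*b+2*a*x)*FF a b x + EE a b x*(2*a^2*b+2*a*x))"
  define sqa where "sqa = sqrt (MM a b x)"
  define sqb where "sqb = sqrt (MM a c y)"
  define X where "X = XX a b c x y z"
  have sqap: "sqa > 0" and sqbp: "sqb > 0" using M1 M2 by (simp_all add: sqa_def sqb_def)
  have sqasq: "sqa^2 = MM a b x" using M1 by (simp add: sqa_def)
  have dX: "((\<lambda>t. XX a t c x y z) has_real_derivative Xb) (at b)"
    unfolding Xb_def by (rule X_deriv_b)
  have dM: "((\<lambda>t. MM a t x) has_real_derivative Mb) (at b)"
    unfolding Mb_def by (rule M_deriv_b)
  have dS: "((\<lambda>t. sqrt (MM a t x)) has_real_derivative (inverse (sqrt (MM a b x)) / 2 * Mb)) (at b)"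
    using DERIV_chain2[OF DERIV_real_sqrt[OF M1] dM] .
  have dDen: "((\<lambda>t. sqrt (MM a t x) * sqb) has_real_derivative (inverse sqa / 2 * Mb * sqb)) (at b)"
    using DERIV_mult[OF dS DERIV_const] by (simp add: sqa_def)
  have dC: "((\<lambda>t. Cf a t c x y z) has_real_derivative
       ((Xb * (sqa* sqb) - X * (inverse sqa / 2 * Mb * sqb)) / ((sqa* sqb)*(sqa* sqb)))) (at b)"
    unfolding Cf_def
    using DERIV_divide[OF dX dDen] sqap sqbp by (simp add: sqa_def sqb_def X_def)
  have Cb: "-1 < Cf a b c x y z \<and> Cf a b c x y z < 1" using C_bounds[OF M1 M2 G pa] .
  have dA: "((\<lambda>t. arccos (Cf a t c x y z)) has_real_derivative
       (inverse (- sqrt (1 - (Cf a b c x y z)\<^sup>2)) * ((Xb * (sqa* sqb) - X * (inverse sqa / 2 * Mb * sqb)) / ((sqa* sqb)*(sqa* sqb))))) (at b)"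
    using DERIV_chain2[OF DERIV_arccos[OF conjunct1[OF Cb] conjunct2[OF Cb]] dC] .
  have sq: "sqrt (1 - (Cf a b c x y z)^2) = sqrt (GG a b c x y z) * pp a / (sqa * sqb)"
    using sqrt_one_minus_C[OF M1 M2 _ pa] G by (simp add: sqa_def sqb_def)
  have Gs: "sqrt (GG a b c x y z) > 0" using G by simp
  have "inverse (- sqrt (1 - (Cf a b c x y z)\<^sup>2)) * ((Xb * (sqa* sqb) - X * (inverse sqa / 2 * Mb * sqb)) / ((sqa* sqb)*(sqa* sqb)))
      = -(2*Xb*MM a b x - X*Mb) / (2 * MM a b x * sqrt (GG a b c x y z) * pp a)"
    unfolding sq using sqap sqbp Gs pa sqasq[symmetric]
    by (simp add: field_simps power2_eq_square)
  also have "-(2*Xb*MM a b x - X*Mb) = 32*a*(pp a)^2*pp b*SS a b c x y z"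
    using cross_id[of b a x c y z] unfolding Xb_def Mb_def X_def by (simp add: algebra_simps)
  also have "32*a*(pp a)^2*pp b*SS a b c x y z / (2 * MM a b x * sqrt (GG a b c x y z) * pp a)
      = 16*a*pp a*pp b*SS a b c x y z / (MM a b x * sqrt (GG a b c x y z))"
    using pa M1 Gs by (simp add: field_simps power2_eq_square)
  finally show ?thesis using dA by simp
qed

definition "Xa a b c x y z = (2*a*qq b + 4*b*x)*NN a c y + NN a b x*(2*a*qq c+4*c*y) + 4*a*pp a*NN b c z"
definition "Ma a b x = 4*((2*a+2*b*x)*FF a b x + EE a b x*(2*a*b^2+2*b*x))"

lemma X_deriv_a: "((\<lambda>t. XX t b c x y z) has_real_derivative Xa a b c x y z) (at a)"
  unfolding XX_def NN_def qq_def pp_def Xa_def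
  apply (rule derivative_eq_intros refl)+
  apply (simp add: power2_eq_square)
  done

lemma M_deriv_a: "((\<lambda>t. MM t b x) has_real_derivative Ma a b x) (at a)"
  unfolding MM_def EE_def FF_def Ma_def
  apply (rule derivative_eq_intros refl)+
  apply (simp add: power2_eq_square)
  apply algebra
  done

lemma D_own:
  assumes M1: "MM a b x > 0" and M2: "MM a c y > 0" and G: "GG a b c x y z > 0"
    and pa: "pp a > 0"
  shows "((\<lambda>t. arccos (Cf t b c x y z)) has_real_derivative
     (-(2*MM a b x*MM a c y*Xa a b c x y z - XX a b c x y z*(Ma a b x*MM a c y + MM a b x*Ma a c y))
       / (2*MM a b x*MM a c y* sqrt (GG a b c x y z)*pp a))) (at a)"
proof -
  define sqa where "sqa = sqrt (MM a b x)"
  define sqb where "sqb = sqrt (MM a c y)"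
  define X where "X = XX a b c x y z"
  have sqap: "sqa > 0" and sqbp: "sqb > 0" using M1 M2 by (simp_all add: sqa_def sqb_def)
  have sqasq: "sqa^2 = MM a b x" using M1 by (simp add: sqa_def)
  have sqbsq: "sqb^2 = MM a c y" using M2 by (simp add: sqb_def)
  have dX: "((\<lambda>t. XX t b c x y z) has_real_derivative Xa a b c x y z) (at a)"
    by (rule X_deriv_a)
  have dS1: "((\<lambda>t. sqrt (MM t b x)) has_real_derivative (inverse sqa / 2 * Ma a b x)) (at a)"
    using DERIV_chain2[OF DERIV_real_sqrt[OF M1] M_deriv_a] by (simp add: sqa_def)
  have dS2: "((\<lambda>t. sqrt (MM t c y)) has_real_derivative (inverse sqb / 2 * Ma a c y)) (at a)"
    using DERIV_chain2[OF DERIV_real_sqrt[OF M2] M_deriv_a] by (simp add: sqb_def)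
  have dDen: "((\<lambda>t. sqrt (MM t b x) * sqrt (MM t c y)) has_real_derivative
        (inverse sqa / 2 * Ma a b x * sqb + sqa * (inverse sqb / 2 * Ma a c y))) (at a)"
    using DERIV_mult[OF dS1 dS2] by (simp add: sqa_def sqb_def mult_ac)
  have dC: "((\<lambda>t. Cf t b c x y z) has_real_derivative
       ((Xa a b c x y z * (sqa * sqb) - X * (inverse sqa / 2 * Ma a b x * sqb + sqa * (inverse sqb / 2 * Ma a c y))) / ((sqa * sqb)*(sqa * sqb)))) (at a)"
    unfolding Cf_def
    using DERIV_divide[OF dX dDen] sqap sqbp by (simp add: sqa_def sqb_def X_def)
  have Cb: "-1 < Cf a b c x y z \<and> Cf a b c x y z < 1" using C_bounds[OF M1 M2 G pa] .
  have dA: "((\<lambda>t. arccos (Cf t b c x y z)) has_real_derivative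
       (inverse (- sqrt (1 - (Cf a b c x y z)\<^sup>2)) * ((Xa a b c x y z * (sqa * sqb) - X * (inverse sqa / 2 * Ma a b x * sqb + sqa * (inverse sqb / 2 * Ma a c y))) / ((sqa * sqb)*(sqa * sqb))))) (at a)"
    using DERIV_chain2[OF DERIV_arccos[OF conjunct1[OF Cb] conjunct2[OF Cb]] dC] .
  have sq: "sqrt (1 - (Cf a b c x y z)^2) = sqrt (GG a b c x y z) * pp a / (sqa * sqb)"
    using sqrt_one_minus_C[OF M1 M2 _ pa] G by (simp add: sqa_def sqb_def)
  have Gs: "sqrt (GG a b c x y z) > 0" using G by simp
  have "inverse (- sqrt (1 - (Cf a b c x y z)\<^sup>2)) * ((Xa a b c x y z * (sqa * sqb) - X * (inverse sqa / 2 * Ma a b x * sqb + sqa * (inverse sqb / 2 * Ma a c y))) / ((sqa * sqb)*(sqa * sqb)))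
      = -(2*MM a b x*MM a c y*Xa a b c x y z - XX a b c x y z*(Ma a b x*MM a c y + MM a b x*Ma a c y))
       / (2*MM a b x*MM a c y* sqrt (GG a b c x y z)*pp a)"
    unfolding sq X_def sqasq[symmetric] sqbsq[symmetric] using sqap sqbp Gs pa
    by (simp add: field_simps power2_eq_square)
  then show ?thesis using dA by simp
qed

lemma cosh_sinh_rad:
  assumes "u < 0"
  shows "cosh (rad_of_u u) = qq (exp u) / pp (exp u) \<and> sinh (rad_of_u u) = 2 * exp u / pp (exp u)"
proof -
  define t where "t = exp u"
  have t0: "0 < t" and t1: "t < 1" using assms by (auto simp: t_def)
  have r: "rad_of_u u = ln ((1+t)/(1-t))"
    unfolding rad_of_u_def artanh_def t_def by simp
  have e1: "exp (rad_of_u u) = (1+t)/(1-t)" unfolding r using t0 t1 by simp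
  have e2: "exp (- rad_of_u u) = (1-t)/(1+t)" unfolding exp_minus e1 using t0 t1 by (simp add: field_simps)
  have tt: "1 - t*t > 0" using t0 t1 mult_strict_mono[of t 1 t 1] by simp
  have "cosh (rad_of_u u) = qq t / pp t"
    unfolding cosh_field_def e1 e2 qq_def pp_def using t0 t1 tt
    by (simp add: field_simps power2_eq_square)
  moreover have "sinh (rad_of_u u) = 2 * t / pp t"
    unfolding sinh_field_def e1 e2 pp_def using t0 t1 tt
    by (simp add: field_simps power2_eq_square)
  ultimately show ?thesis by (simp add: t_def)
qed

lemma pp_pos: "0 < t \<Longrightarrow> t < 1 \<Longrightarrow> pp t > 0"
  unfolding pp_def by (simp add: power_less_one_iff abs_less_iff power2_less_1_iff)

lemma NN_minus: "NN a b x - pp a * pp b = 2 * EE a b x"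
  unfolding NN_def pp_def qq_def EE_def by algebra

lemma NN_sq: "(NN a b x)^2 - (pp a * pp b)^2 = MM a b x"
  unfolding NN_def pp_def qq_def EE_def MM_def FF_def by algebra

lemma EE_nonneg: "x \<ge> -1 \<Longrightarrow> 0 \<le> a \<Longrightarrow> 0 \<le> b \<Longrightarrow> EE a b x \<ge> 0"
proof -
  assume h: "x \<ge> -1" "0 \<le> a" "0 \<le> b"
  have "EE a b x = (a-b)^2 + 2*a*b*(1+x)" unfolding EE_def by algebra
  also have "\<dots> \<ge> 0" using h by (intro add_nonneg_nonneg) auto
  finally show ?thesis .
qed

lemma edge_vals:
  assumes "v \<noteq> w" "u v < 0" "u w < 0" "cos (\<Phi> {v,w}) \<ge> -1"
  defines "r \<equiv> (\<lambda>w. rad_of_u (u w))"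
  shows "cosh (edge_len \<Phi> r {v,w}) = NN (exp (u v)) (exp (u w)) (cos (\<Phi> {v,w})) / (pp (exp (u v)) * pp (exp (u w)))
     \<and> sinh (edge_len \<Phi> r {v,w}) = sqrt (MM (exp (u v)) (exp (u w)) (cos (\<Phi> {v,w}))) / (pp (exp (u v)) * pp (exp (u w)))"
proof -
  define a where "a = exp (u v)"
  define b where "b = exp (u w)"
  define x where "x = cos (\<Phi> {v,w})"
  have a0: "0 < a" "a < 1" and b0: "0 < b" "b < 1" using assms by (auto simp: a_def b_def)
  have pa: "pp a > 0" and pb: "pp b > 0" using a0 b0 pp_pos by auto
  have cv: "cosh (r v) = qq a / pp a" "sinh (r v) = 2*a / pp a"
    using cosh_sinh_rad[OF assms(2)] by (simp_all add: r_def a_def)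
  have cw: "cosh (r w) = qq b / pp b" "sinh (r w) = 2*b / pp b"
    using cosh_sinh_rad[OF assms(3)] by (simp_all add: r_def b_def)
  have L: "(\<Prod>z\<in>{v,w}. cosh (r z)) + (\<Prod>z\<in>{v,w}. sinh (r z)) * cos (\<Phi> {v,w}) = NN a b x / (pp a * pp b)"
    using assms(1) pa pb by (simp add: cv cw NN_def x_def field_simps)
  have E: "EE a b x \<ge> 0" using EE_nonneg[of x a b] assms(4) a0 b0 by (simp add: x_def)
  have L1: "NN a b x / (pp a * pp b) \<ge> 1"
    using NN_minus[of a b x] E pa pb by (simp add: field_simps)
  have el: "edge_len \<Phi> r {v,w} = arcosh (NN a b x / (pp a * pp b))"
    unfolding edge_len_def L ..
  have "sinh (edge_len \<Phi> r {v,w}) = sqrt ((NN a b x / (pp a * pp b))^2 - 1)"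
    unfolding el using L1 by (rule sinh_arcosh_real)
  also have "(NN a b x / (pp a * pp b))^2 - 1 = MM a b x / (pp a * pp b)^2"
    using NN_sq[of a b x] pa pb by (simp add: field_simps power_divide)
  also have "sqrt \<dots> = sqrt (MM a b x) / (pp a * pp b)"
    using pa pb by (simp add: real_sqrt_divide)
  finally show ?thesis using el L1 by (simp add: a_def b_def x_def)
qed

lemma EE_lower: "0 \<le> a \<Longrightarrow> 0 \<le> b \<Longrightarrow> x \<ge> -1 \<Longrightarrow> EE a b x \<ge> 2*a*b*(1+x)"
proof -
  assume h: "0 \<le> a" "0 \<le> b" "x \<ge> -1"
  have "EE a b x = (a-b)^2 + 2*a*b*(1+x)" unfolding EE_def by algebra
  then show ?thesis by simp
qed

lemma FF_lower: "0 \<le> a \<Longrightarrow> 0 \<le> b \<Longrightarrow> x \<ge> -1 \<Longrightarrow> FF a b x \<ge> 2*a*b*(1+x)"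
proof -
  assume h: "0 \<le> a" "0 \<le> b" "x \<ge> -1"
  have "FF a b x = (1-a*b)^2 + 2*a*b*(1+x)" unfolding FF_def by algebra
  then show ?thesis by simp
qed

lemma MM_pos: "0 < a \<Longrightarrow> 0 < b \<Longrightarrow> x > -1 \<Longrightarrow> MM a b x > 0"
proof -
  assume h: "0 < a" "0 < b" "x > -1"
  have p: "2*a*b*(1+x) > 0" using h by simp
  have "EE a b x > 0" using EE_lower[of a b x] h p by linarith
  moreover have "FF a b x > 0" using FF_lower[of a b x] h p by linarith
  ultimately show ?thesis unfolding MM_def by simp
qed

lemma angle_formula:
  assumes d: "i \<noteq> j" "i \<noteq> k" "j \<noteq> k" and neg: "u i < 0" "u j < 0" "u k < 0"
    and cx: "cos (\<Phi> {i,j}) > -1" and cy: "cos (\<Phi> {i,k}) > -1"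
  shows "angle_u \<Phi> u {i,j,k} i = arccos (Cf (exp (u i)) (exp (u j)) (exp (u k))
            (cos (\<Phi> {i,j})) (cos (\<Phi> {i,k})) (cos (\<Phi> {j,k})))"
proof -
  define r where "r = (\<lambda>w. rad_of_u (u w))"
  define a where "a = exp (u i)"
  define b where "b = exp (u j)"
  define c where "c = exp (u k)"
  define x where "x = cos (\<Phi> {i,j})"
  define y where "y = cos (\<Phi> {i,k})"
  define z where "z = cos (\<Phi> {j,k})"
  have a0: "0 < a" "a < 1" and b0: "0 < b" "b < 1" and c0: "0 < c" "c < 1"
    using neg by (auto simp: a_def b_def c_def)
  have pa: "pp a > 0" and pb: "pp b > 0" and pc: "pp c > 0" using a0 b0 c0 pp_pos by auto
  have M1: "MM a b x > 0" using MM_pos a0 b0 cx by (simp add: x_def)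
  have M2: "MM a c y > 0" using MM_pos a0 c0 cy by (simp add: y_def)
  have eij: "cosh (edge_len \<Phi> r {i,j}) = NN a b x / (pp a * pp b)"
            "sinh (edge_len \<Phi> r {i,j}) = sqrt (MM a b x) / (pp a * pp b)"
    using edge_vals[of i j u \<Phi>] d neg cos_ge_minus_one by (auto simp: r_def a_def b_def x_def)
  have eik: "cosh (edge_len \<Phi> r {i,k}) = NN a c y / (pp a * pp c)"
            "sinh (edge_len \<Phi> r {i,k}) = sqrt (MM a c y) / (pp a * pp c)"
    using edge_vals[of i k u \<Phi>] d neg cos_ge_minus_one by (auto simp: r_def a_def c_def y_def)
  have ejk: "cosh (edge_len \<Phi> r {j,k}) = NN b c z / (pp b * pp c)"
    using edge_vals[of j k u \<Phi>] d neg cos_ge_minus_one by (auto simp: r_def b_def c_def z_def)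
  have fm: "{i,j,k} - {i} = {j,k}" using d by auto
  have "face_angle \<Phi> r {i,j,k} i = arccos ((cosh (edge_len \<Phi> r {i,j}) * cosh (edge_len \<Phi> r {i,k}) - cosh (edge_len \<Phi> r {j,k}))
            / (sinh (edge_len \<Phi> r {i,j}) * sinh (edge_len \<Phi> r {i,k})))"
    unfolding face_angle_def fm using d by simp
  also have "(cosh (edge_len \<Phi> r {i,j}) * cosh (edge_len \<Phi> r {i,k}) - cosh (edge_len \<Phi> r {j,k}))
            / (sinh (edge_len \<Phi> r {i,j}) * sinh (edge_len \<Phi> r {i,k})) = Cf a b c x y z"
    unfolding eij eik ejk Cf_def XX_def using pa pb pc M1 M2
    by (simp add: field_simps power2_eq_square)
  finally show ?thesis unfolding angle_u_def r_def a_def b_def c_def x_def y_def z_def .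
qed


definition Kf :: "real \<Rightarrow> real \<Rightarrow> real \<Rightarrow> real" where "Kf x y z = 1 + x^2 + y^2 + z^2 + 4*x*y*z"
definition KW :: "real \<Rightarrow> real \<Rightarrow> real \<Rightarrow> real" where "KW x y z = x^2 + y^2 + 2 + 4*x*y*z"
definition "Gg a b c x y z = (1*(a^4*b^2*c^2*(1-z^2)) + 1*(a^2*b^4*c^2*(1-y^2)) + 1*(a^2*b^2*c^4*(1-x^2)) + 1*(a^2*b^2*c^0*(1-x^2)) + 1*(a^2*b^0*c^2*(1-y^2)) + 1*(a^0*b^2*c^2*(1-z^2)) + 2*(a^3*b^3*c^2*(x+y*z)) + 2*(a^3*b^2*c^3*(y+x*z)) + 2*(a^3*b^2*c^1*(y+x*z)) + 2*(a^3*b^1*c^2*(x+y*z)) + 2*(a^2*b^3*c^3*(z+x*y)) + 2*(a^2*b^3*c^1*(z+x*y)) + 2*(a^2*b^1*c^3*(z+x*y)) + 2*(a^2*b^1*c^1*(z+x*y)) + 2*(a^1*b^3*c^2*(x+y*z)) + 2*(a^1*b^2*c^3*(y+x*z)) + 2*(a^1*b^2*c^1*(y+x*z)) + 2*(a^1*b^1*c^2*(x+y*z)) + 2*(a^2*b^2*c^2*Kf x y z))"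
definition "Wg a b c x y z = (1*(a^4*b^3*c^2*(x+y*z)) + 1*(a^4*b^2*c^3*(y+x*z)) + 1*(a^3*b^4*c^2*(1-y^2)) + 1*(a^3*b^2*c^4*(1-x^2)) + 2*(a^3*b^3*c^3*(z+x*y)) + 1*(a^3*b^3*c^1*(z+x*y)) + 3*(a^2*b^3*c^2*(x+y*z)) + 3*(a^2*b^2*c^3*(y+x*z)) + 3*(a^2*b^2*c^1*(y+x*z)) + 3*(a^2*b^1*c^2*(x+y*z)) + 1*(a^3*b^1*c^3*(z+x*y)) + 1*(a^1*b^3*c^1*(z+x*y)) + 1*(a^1*b^1*c^3*(z+x*y)) + 1*(a^1*b^2*c^2*KW x y z) + 1*(a^1*b^2*c^0*(1-x^2)) + 1*(a^1*b^0*c^2*(1-y^2)) + 2*(a^1*b^1*c^1*(z+x*y)) + 1*(a^0*b^2*c^1*(y+x*z)) + 1*(a^0*b^1*c^2*(x+y*z)) + 1*(a^3*b^2*c^2*KW x y z))"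

lemma GG_eq: "GG a b c x y z = 16 * Gg a b c x y z"
  unfolding GG_def Gg_def Kf_def NN_def pp_def qq_def by algebra

lemma mono1: "0 \<le> a \<Longrightarrow> a \<le> 1 \<Longrightarrow> 0 \<le> b \<Longrightarrow> b \<le> 1 \<Longrightarrow> 0 \<le> c \<Longrightarrow> c \<le> 1 \<Longrightarrow>
   0 \<le> a^i*b^j*c^k \<and> a^i*b^j*c^k \<le> (1::real)"
  by (auto intro!: mult_le_one power_le_one)

lemma mg: "0 \<le> m \<and> m \<le> 1 \<Longrightarrow> 0 \<le> g \<Longrightarrow> g \<le> B \<Longrightarrow> m * g \<le> (B::real)"
  by (metis mult_left_le_one_le order_trans)

lemma Kf_lower:
  assumes d: "0 \<le> \<delta>" "\<delta> \<le> 1" and bx: "\<delta> - 1 \<le> x" "x \<le> 1" and by': "\<delta> - 1 \<le> y" "y \<le> 1" and bz: "\<delta> - 1 \<le> z" "z \<le> 1"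
  shows "Kf x y z \<ge> \<delta>^2"
proof -
  have key: "Kf p q w \<ge> \<delta>^2" if "w < 0" "\<delta> - 1 \<le> w" "\<bar>p\<bar> \<le> 1" "\<bar>q\<bar> \<le> 1" "Kf p q w = Kf x y z" for p q w
  proof -
    have aw: "\<bar>w\<bar> \<le> 1 - \<delta>" using that d by auto
    have pq: "\<bar>p*q\<bar> \<le> 1" using that by (simp add: abs_mult mult_le_one)
    have h1: "p^2 + q^2 + 2*p*q*w \<ge> 0"
    proof -
      have "2*\<bar>p\<bar>*\<bar>q\<bar> \<le> p^2 + q^2" using sum_squares_bound[of "\<bar>p\<bar>" "\<bar>q\<bar>"]
        by (simp add: power2_eq_square)
      moreover have "\<bar>2*p*q*w\<bar> \<le> 2*\<bar>p\<bar>*\<bar>q\<bar>"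
      proof -
        have w1: "\<bar>w\<bar> \<le> 1" using aw d by linarith
        have "\<bar>w\<bar>*(\<bar>p\<bar>*\<bar>q\<bar>) \<le> \<bar>p\<bar>*\<bar>q\<bar>" using w1 by (intro mult_left_le_one_le) auto
        then show ?thesis by (simp add: abs_mult algebra_simps)
      qed
      ultimately show ?thesis by linarith
    qed
    have h2: "1 + w^2 + 2*p*q*w \<ge> (1 - \<bar>w\<bar>)^2"
    proof -
      have "\<bar>p*q\<bar>*\<bar>w\<bar> \<le> \<bar>w\<bar>" using pq by (intro mult_left_le_one_le) auto
      then have "\<bar>2*p*q*w\<bar> \<le> 2*\<bar>w\<bar>" by (simp add: abs_mult algebra_simps)
      then show ?thesis by (simp add: power2_eq_square algebra_simps abs_mult_self_eq)
    qed
    have h3: "(1 - \<bar>w\<bar>)^2 \<ge> \<delta>^2" using aw d by (intro power_mono) auto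
    have "Kf p q w = (p^2 + q^2 + 2*p*q*w) + (1 + w^2 + 2*p*q*w)" unfolding Kf_def by algebra
    then show ?thesis using h1 h2 h3 by linarith
  qed
  show ?thesis
  proof (cases "x*y*z \<ge> 0")
    case True
    then have "Kf x y z \<ge> 1" unfolding Kf_def by (simp add: add_nonneg_nonneg)
    moreover have "\<delta>^2 \<le> 1" using d by (simp add: power_le_one)
    ultimately show ?thesis by linarith
  next
    case False
    then have "x < 0 \<or> y < 0 \<or> z < 0" by (metis mult_nonneg_nonneg not_le)
    moreover have ax: "\<bar>x\<bar> \<le> 1" and ay: "\<bar>y\<bar> \<le> 1" and az: "\<bar>z\<bar> \<le> 1" using d bx by' bz by auto
    ultimately show ?thesis
    proof (elim disjE)
      assume "z < 0" then show ?thesis using key[of z x y] bz ax ay by simp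
    next
      assume "x < 0" then show ?thesis using key[of x y z] bx ay az unfolding Kf_def by (simp add: algebra_simps)
    next
      assume "y < 0" then show ?thesis using key[of y x z] by' ax az unfolding Kf_def by (simp add: algebra_simps)
    qed
  qed
qed

context
  fixes a b c x y z :: real
  assumes ab: "0 \<le> a" "a \<le> 1" "0 \<le> b" "b \<le> 1" "0 \<le> c" "c \<le> 1"
    "-1 \<le> x" "x \<le> 1" "-1 \<le> y" "y \<le> 1" "-1 \<le> z" "z \<le> 1"
    and us: "0 \<le> x + y*z" "0 \<le> y + x*z" "0 \<le> z + x*y"
begin

lemma groups:
  "0 \<le> 1 - x^2" "1 - x^2 \<le> 1" "0 \<le> 1 - y^2" "1 - y^2 \<le> 1" "0 \<le> 1 - z^2" "1 - z^2 \<le> 1"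
  "x + y*z \<le> 2" "y + x*z \<le> 2" "z + x*y \<le> 2"
  "0 \<le> Kf x y z" "Kf x y z \<le> 8" "0 \<le> KW x y z" "KW x y z \<le> 8" "Kf x y z \<le> KW x y z"
  "x^2 \<le> 1" "y^2 \<le> 1" "z^2 \<le> 1"
proof -
  have ax: "\<bar>x\<bar> \<le> 1" and ay: "\<bar>y\<bar> \<le> 1" and az: "\<bar>z\<bar> \<le> 1" using ab by auto
  show sq: "x^2 \<le> 1" "y^2 \<le> 1" "z^2 \<le> 1" using ax ay az by (simp_all add: abs_square_le_1)
  have pr: "\<bar>y*z\<bar> \<le> 1" "\<bar>x*z\<bar> \<le> 1" "\<bar>x*y\<bar> \<le> 1" "\<bar>x*y*z\<bar> \<le> 1"
    using ax ay az by (simp_all add: abs_mult mult_le_one)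
  show "0 \<le> 1 - x^2" "1 - x^2 \<le> 1" "0 \<le> 1 - y^2" "1 - y^2 \<le> 1" "0 \<le> 1 - z^2" "1 - z^2 \<le> 1"
    using sq by auto
  show "x + y*z \<le> 2" "y + x*z \<le> 2" "z + x*y \<le> 2" using pr ab by auto
  have K0: "0 \<le> Kf x y z" using Kf_lower[of 0 x y z] ab by simp
  show "0 \<le> Kf x y z" by (rule K0)
  show "Kf x y z \<le> 8" unfolding Kf_def using sq pr by (simp add: abs_le_iff)
  show "Kf x y z \<le> KW x y z" unfolding Kf_def KW_def using sq by simp
  then show "0 \<le> KW x y z" using K0 by linarith
  show "KW x y z \<le> 8" unfolding KW_def using sq pr by (simp add: abs_le_iff)
qed

lemma Gg_upper: "Gg a b c x y z \<le> 70"
proof -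
  note grp = groups us
  have t0: "a^4*b^2*c^2*(1-z^2) \<le> 1" by (rule mg[OF mono1[of a b c 4 2 2]]) (simp_all add: ab grp)
  have t1: "a^2*b^4*c^2*(1-y^2) \<le> 1" by (rule mg[OF mono1[of a b c 2 4 2]]) (simp_all add: ab grp)
  have t2: "a^2*b^2*c^4*(1-x^2) \<le> 1" by (rule mg[OF mono1[of a b c 2 2 4]]) (simp_all add: ab grp)
  have t3: "a^2*b^2*c^0*(1-x^2) \<le> 1" by (rule mg[OF mono1[of a b c 2 2 0]]) (simp_all add: ab grp)
  have t4: "a^2*b^0*c^2*(1-y^2) \<le> 1" by (rule mg[OF mono1[of a b c 2 0 2]]) (simp_all add: ab grp)
  have t5: "a^0*b^2*c^2*(1-z^2) \<le> 1" by (rule mg[OF mono1[of a b c 0 2 2]]) (simp_all add: ab grp)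
  have t6: "a^3*b^3*c^2*(x+y*z) \<le> 2" by (rule mg[OF mono1[of a b c 3 3 2]]) (simp_all add: ab grp)
  have t7: "a^3*b^2*c^3*(y+x*z) \<le> 2" by (rule mg[OF mono1[of a b c 3 2 3]]) (simp_all add: ab grp)
  have t8: "a^3*b^2*c^1*(y+x*z) \<le> 2" by (rule mg[OF mono1[of a b c 3 2 1]]) (simp_all add: ab grp)
  have t9: "a^3*b^1*c^2*(x+y*z) \<le> 2" by (rule mg[OF mono1[of a b c 3 1 2]]) (simp_all add: ab grp)
  have t10: "a^2*b^3*c^3*(z+x*y) \<le> 2" by (rule mg[OF mono1[of a b c 2 3 3]]) (simp_all add: ab grp)
  have t11: "a^2*b^3*c^1*(z+x*y) \<le> 2" by (rule mg[OF mono1[of a b c 2 3 1]]) (simp_all add: ab grp)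
  have t12: "a^2*b^1*c^3*(z+x*y) \<le> 2" by (rule mg[OF mono1[of a b c 2 1 3]]) (simp_all add: ab grp)
  have t13: "a^2*b^1*c^1*(z+x*y) \<le> 2" by (rule mg[OF mono1[of a b c 2 1 1]]) (simp_all add: ab grp)
  have t14: "a^1*b^3*c^2*(x+y*z) \<le> 2" by (rule mg[OF mono1[of a b c 1 3 2]]) (simp_all add: ab grp)
  have t15: "a^1*b^2*c^3*(y+x*z) \<le> 2" by (rule mg[OF mono1[of a b c 1 2 3]]) (simp_all add: ab grp)
  have t16: "a^1*b^2*c^1*(y+x*z) \<le> 2" by (rule mg[OF mono1[of a b c 1 2 1]]) (simp_all add: ab grp)
  have t17: "a^1*b^1*c^2*(x+y*z) \<le> 2" by (rule mg[OF mono1[of a b c 1 1 2]]) (simp_all add: ab grp)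
  have t18: "a^2*b^2*c^2*Kf x y z \<le> 8" by (rule mg[OF mono1[of a b c 2 2 2]]) (simp_all add: ab grp)
  have n0: "0 \<le> a^4*b^2*c^2*(1-z^2)" using ab grp by (intro mult_nonneg_nonneg) (simp_all add: ab grp)
  have n1: "0 \<le> a^2*b^4*c^2*(1-y^2)" using ab grp by (intro mult_nonneg_nonneg) (simp_all add: ab grp)
  have n2: "0 \<le> a^2*b^2*c^4*(1-x^2)" using ab grp by (intro mult_nonneg_nonneg) (simp_all add: ab grp)
  have n3: "0 \<le> a^2*b^2*c^0*(1-x^2)" using ab grp by (intro mult_nonneg_nonneg) (simp_all add: ab grp)
  have n4: "0 \<le> a^2*b^0*c^2*(1-y^2)" using ab grp by (intro mult_nonneg_nonneg) (simp_all add: ab grp)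
  have n5: "0 \<le> a^0*b^2*c^2*(1-z^2)" using ab grp by (intro mult_nonneg_nonneg) (simp_all add: ab grp)
  have n6: "0 \<le> a^3*b^3*c^2*(x+y*z)" using ab grp by (intro mult_nonneg_nonneg) (simp_all add: ab grp)
  have n7: "0 \<le> a^3*b^2*c^3*(y+x*z)" using ab grp by (intro mult_nonneg_nonneg) (simp_all add: ab grp)
  have n8: "0 \<le> a^3*b^2*c^1*(y+x*z)" using ab grp by (intro mult_nonneg_nonneg) (simp_all add: ab grp)
  have n9: "0 \<le> a^3*b^1*c^2*(x+y*z)" using ab grp by (intro mult_nonneg_nonneg) (simp_all add: ab grp)
  have n10: "0 \<le> a^2*b^3*c^3*(z+x*y)" using ab grp by (intro mult_nonneg_nonneg) (simp_all add: ab grp)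
  have n11: "0 \<le> a^2*b^3*c^1*(z+x*y)" using ab grp by (intro mult_nonneg_nonneg) (simp_all add: ab grp)
  have n12: "0 \<le> a^2*b^1*c^3*(z+x*y)" using ab grp by (intro mult_nonneg_nonneg) (simp_all add: ab grp)
  have n13: "0 \<le> a^2*b^1*c^1*(z+x*y)" using ab grp by (intro mult_nonneg_nonneg) (simp_all add: ab grp)
  have n14: "0 \<le> a^1*b^3*c^2*(x+y*z)" using ab grp by (intro mult_nonneg_nonneg) (simp_all add: ab grp)
  have n15: "0 \<le> a^1*b^2*c^3*(y+x*z)" using ab grp by (intro mult_nonneg_nonneg) (simp_all add: ab grp)
  have n16: "0 \<le> a^1*b^2*c^1*(y+x*z)" using ab grp by (intro mult_nonneg_nonneg) (simp_all add: ab grp)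
  have n17: "0 \<le> a^1*b^1*c^2*(x+y*z)" using ab grp by (intro mult_nonneg_nonneg) (simp_all add: ab grp)
  have n18: "0 \<le> a^2*b^2*c^2*Kf x y z" using ab grp by (intro mult_nonneg_nonneg) (simp_all add: ab grp)
  show ?thesis unfolding Gg_def using t0 t1 t2 t3 t4 t5 t6 t7 t8 t9 t10 t11 t12 t13 t14 t15 t16 t17 t18 by linarith
qed

lemma Gg_lower: "Gg a b c x y z \<ge> 2*(a^2*b^2*c^2*Kf x y z)"
proof -
  note grp = groups us
  have t0: "a^4*b^2*c^2*(1-z^2) \<le> 1" by (rule mg[OF mono1[of a b c 4 2 2]]) (simp_all add: ab grp)
  have t1: "a^2*b^4*c^2*(1-y^2) \<le> 1" by (rule mg[OF mono1[of a b c 2 4 2]]) (simp_all add: ab grp)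
  have t2: "a^2*b^2*c^4*(1-x^2) \<le> 1" by (rule mg[OF mono1[of a b c 2 2 4]]) (simp_all add: ab grp)
  have t3: "a^2*b^2*c^0*(1-x^2) \<le> 1" by (rule mg[OF mono1[of a b c 2 2 0]]) (simp_all add: ab grp)
  have t4: "a^2*b^0*c^2*(1-y^2) \<le> 1" by (rule mg[OF mono1[of a b c 2 0 2]]) (simp_all add: ab grp)
  have t5: "a^0*b^2*c^2*(1-z^2) \<le> 1" by (rule mg[OF mono1[of a b c 0 2 2]]) (simp_all add: ab grp)
  have t6: "a^3*b^3*c^2*(x+y*z) \<le> 2" by (rule mg[OF mono1[of a b c 3 3 2]]) (simp_all add: ab grp)
  have t7: "a^3*b^2*c^3*(y+x*z) \<le> 2" by (rule mg[OF mono1[of a b c 3 2 3]]) (simp_all add: ab grp)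
  have t8: "a^3*b^2*c^1*(y+x*z) \<le> 2" by (rule mg[OF mono1[of a b c 3 2 1]]) (simp_all add: ab grp)
  have t9: "a^3*b^1*c^2*(x+y*z) \<le> 2" by (rule mg[OF mono1[of a b c 3 1 2]]) (simp_all add: ab grp)
  have t10: "a^2*b^3*c^3*(z+x*y) \<le> 2" by (rule mg[OF mono1[of a b c 2 3 3]]) (simp_all add: ab grp)
  have t11: "a^2*b^3*c^1*(z+x*y) \<le> 2" by (rule mg[OF mono1[of a b c 2 3 1]]) (simp_all add: ab grp)
  have t12: "a^2*b^1*c^3*(z+x*y) \<le> 2" by (rule mg[OF mono1[of a b c 2 1 3]]) (simp_all add: ab grp)
  have t13: "a^2*b^1*c^1*(z+x*y) \<le> 2" by (rule mg[OF mono1[of a b c 2 1 1]]) (simp_all add: ab grp)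
  have t14: "a^1*b^3*c^2*(x+y*z) \<le> 2" by (rule mg[OF mono1[of a b c 1 3 2]]) (simp_all add: ab grp)
  have t15: "a^1*b^2*c^3*(y+x*z) \<le> 2" by (rule mg[OF mono1[of a b c 1 2 3]]) (simp_all add: ab grp)
  have t16: "a^1*b^2*c^1*(y+x*z) \<le> 2" by (rule mg[OF mono1[of a b c 1 2 1]]) (simp_all add: ab grp)
  have t17: "a^1*b^1*c^2*(x+y*z) \<le> 2" by (rule mg[OF mono1[of a b c 1 1 2]]) (simp_all add: ab grp)
  have t18: "a^2*b^2*c^2*Kf x y z \<le> 8" by (rule mg[OF mono1[of a b c 2 2 2]]) (simp_all add: ab grp)
  have n0: "0 \<le> a^4*b^2*c^2*(1-z^2)" using ab grp by (intro mult_nonneg_nonneg) (simp_all add: ab grp)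
  have n1: "0 \<le> a^2*b^4*c^2*(1-y^2)" using ab grp by (intro mult_nonneg_nonneg) (simp_all add: ab grp)
  have n2: "0 \<le> a^2*b^2*c^4*(1-x^2)" using ab grp by (intro mult_nonneg_nonneg) (simp_all add: ab grp)
  have n3: "0 \<le> a^2*b^2*c^0*(1-x^2)" using ab grp by (intro mult_nonneg_nonneg) (simp_all add: ab grp)
  have n4: "0 \<le> a^2*b^0*c^2*(1-y^2)" using ab grp by (intro mult_nonneg_nonneg) (simp_all add: ab grp)
  have n5: "0 \<le> a^0*b^2*c^2*(1-z^2)" using ab grp by (intro mult_nonneg_nonneg) (simp_all add: ab grp)
  have n6: "0 \<le> a^3*b^3*c^2*(x+y*z)" using ab grp by (intro mult_nonneg_nonneg) (simp_all add: ab grp)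
  have n7: "0 \<le> a^3*b^2*c^3*(y+x*z)" using ab grp by (intro mult_nonneg_nonneg) (simp_all add: ab grp)
  have n8: "0 \<le> a^3*b^2*c^1*(y+x*z)" using ab grp by (intro mult_nonneg_nonneg) (simp_all add: ab grp)
  have n9: "0 \<le> a^3*b^1*c^2*(x+y*z)" using ab grp by (intro mult_nonneg_nonneg) (simp_all add: ab grp)
  have n10: "0 \<le> a^2*b^3*c^3*(z+x*y)" using ab grp by (intro mult_nonneg_nonneg) (simp_all add: ab grp)
  have n11: "0 \<le> a^2*b^3*c^1*(z+x*y)" using ab grp by (intro mult_nonneg_nonneg) (simp_all add: ab grp)
  have n12: "0 \<le> a^2*b^1*c^3*(z+x*y)" using ab grp by (intro mult_nonneg_nonneg) (simp_all add: ab grp)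
  have n13: "0 \<le> a^2*b^1*c^1*(z+x*y)" using ab grp by (intro mult_nonneg_nonneg) (simp_all add: ab grp)
  have n14: "0 \<le> a^1*b^3*c^2*(x+y*z)" using ab grp by (intro mult_nonneg_nonneg) (simp_all add: ab grp)
  have n15: "0 \<le> a^1*b^2*c^3*(y+x*z)" using ab grp by (intro mult_nonneg_nonneg) (simp_all add: ab grp)
  have n16: "0 \<le> a^1*b^2*c^1*(y+x*z)" using ab grp by (intro mult_nonneg_nonneg) (simp_all add: ab grp)
  have n17: "0 \<le> a^1*b^1*c^2*(x+y*z)" using ab grp by (intro mult_nonneg_nonneg) (simp_all add: ab grp)
  have n18: "0 \<le> a^2*b^2*c^2*Kf x y z" using ab grp by (intro mult_nonneg_nonneg) (simp_all add: ab grp)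
  show ?thesis unfolding Gg_def using n0 n1 n2 n3 n4 n5 n6 n7 n8 n9 n10 n11 n12 n13 n14 n15 n16 n17 n18 by linarith
qed

lemma Wg_upper: "Wg a b c x y z \<le> 68"
proof -
  note grp = groups us
  have t0: "a^4*b^3*c^2*(x+y*z) \<le> 2" by (rule mg[OF mono1[of a b c 4 3 2]]) (simp_all add: ab grp)
  have t1: "a^4*b^2*c^3*(y+x*z) \<le> 2" by (rule mg[OF mono1[of a b c 4 2 3]]) (simp_all add: ab grp)
  have t2: "a^3*b^4*c^2*(1-y^2) \<le> 1" by (rule mg[OF mono1[of a b c 3 4 2]]) (simp_all add: ab grp)
  have t3: "a^3*b^2*c^4*(1-x^2) \<le> 1" by (rule mg[OF mono1[of a b c 3 2 4]]) (simp_all add: ab grp)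
  have t4: "a^3*b^3*c^3*(z+x*y) \<le> 2" by (rule mg[OF mono1[of a b c 3 3 3]]) (simp_all add: ab grp)
  have t5: "a^3*b^3*c^1*(z+x*y) \<le> 2" by (rule mg[OF mono1[of a b c 3 3 1]]) (simp_all add: ab grp)
  have t6: "a^2*b^3*c^2*(x+y*z) \<le> 2" by (rule mg[OF mono1[of a b c 2 3 2]]) (simp_all add: ab grp)
  have t7: "a^2*b^2*c^3*(y+x*z) \<le> 2" by (rule mg[OF mono1[of a b c 2 2 3]]) (simp_all add: ab grp)
  have t8: "a^2*b^2*c^1*(y+x*z) \<le> 2" by (rule mg[OF mono1[of a b c 2 2 1]]) (simp_all add: ab grp)
  have t9: "a^2*b^1*c^2*(x+y*z) \<le> 2" by (rule mg[OF mono1[of a b c 2 1 2]]) (simp_all add: ab grp)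
  have t10: "a^3*b^1*c^3*(z+x*y) \<le> 2" by (rule mg[OF mono1[of a b c 3 1 3]]) (simp_all add: ab grp)
  have t11: "a^1*b^3*c^1*(z+x*y) \<le> 2" by (rule mg[OF mono1[of a b c 1 3 1]]) (simp_all add: ab grp)
  have t12: "a^1*b^1*c^3*(z+x*y) \<le> 2" by (rule mg[OF mono1[of a b c 1 1 3]]) (simp_all add: ab grp)
  have t13: "a^1*b^2*c^2*KW x y z \<le> 8" by (rule mg[OF mono1[of a b c 1 2 2]]) (simp_all add: ab grp)
  have t14: "a^1*b^2*c^0*(1-x^2) \<le> 1" by (rule mg[OF mono1[of a b c 1 2 0]]) (simp_all add: ab grp)
  have t15: "a^1*b^0*c^2*(1-y^2) \<le> 1" by (rule mg[OF mono1[of a b c 1 0 2]]) (simp_all add: ab grp)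
  have t16: "a^1*b^1*c^1*(z+x*y) \<le> 2" by (rule mg[OF mono1[of a b c 1 1 1]]) (simp_all add: ab grp)
  have t17: "a^0*b^2*c^1*(y+x*z) \<le> 2" by (rule mg[OF mono1[of a b c 0 2 1]]) (simp_all add: ab grp)
  have t18: "a^0*b^1*c^2*(x+y*z) \<le> 2" by (rule mg[OF mono1[of a b c 0 1 2]]) (simp_all add: ab grp)
  have t19: "a^3*b^2*c^2*KW x y z \<le> 8" by (rule mg[OF mono1[of a b c 3 2 2]]) (simp_all add: ab grp)
  have n0: "0 \<le> a^4*b^3*c^2*(x+y*z)" using ab grp by (intro mult_nonneg_nonneg) (simp_all add: ab grp)
  have n1: "0 \<le> a^4*b^2*c^3*(y+x*z)" using ab grp by (intro mult_nonneg_nonneg) (simp_all add: ab grp)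
  have n2: "0 \<le> a^3*b^4*c^2*(1-y^2)" using ab grp by (intro mult_nonneg_nonneg) (simp_all add: ab grp)
  have n3: "0 \<le> a^3*b^2*c^4*(1-x^2)" using ab grp by (intro mult_nonneg_nonneg) (simp_all add: ab grp)
  have n4: "0 \<le> a^3*b^3*c^3*(z+x*y)" using ab grp by (intro mult_nonneg_nonneg) (simp_all add: ab grp)
  have n5: "0 \<le> a^3*b^3*c^1*(z+x*y)" using ab grp by (intro mult_nonneg_nonneg) (simp_all add: ab grp)
  have n6: "0 \<le> a^2*b^3*c^2*(x+y*z)" using ab grp by (intro mult_nonneg_nonneg) (simp_all add: ab grp)
  have n7: "0 \<le> a^2*b^2*c^3*(y+x*z)" using ab grp by (intro mult_nonneg_nonneg) (simp_all add: ab grp)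
  have n8: "0 \<le> a^2*b^2*c^1*(y+x*z)" using ab grp by (intro mult_nonneg_nonneg) (simp_all add: ab grp)
  have n9: "0 \<le> a^2*b^1*c^2*(x+y*z)" using ab grp by (intro mult_nonneg_nonneg) (simp_all add: ab grp)
  have n10: "0 \<le> a^3*b^1*c^3*(z+x*y)" using ab grp by (intro mult_nonneg_nonneg) (simp_all add: ab grp)
  have n11: "0 \<le> a^1*b^3*c^1*(z+x*y)" using ab grp by (intro mult_nonneg_nonneg) (simp_all add: ab grp)
  have n12: "0 \<le> a^1*b^1*c^3*(z+x*y)" using ab grp by (intro mult_nonneg_nonneg) (simp_all add: ab grp)
  have n13: "0 \<le> a^1*b^2*c^2*KW x y z" using ab grp by (intro mult_nonneg_nonneg) (simp_all add: ab grp)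
  have n14: "0 \<le> a^1*b^2*c^0*(1-x^2)" using ab grp by (intro mult_nonneg_nonneg) (simp_all add: ab grp)
  have n15: "0 \<le> a^1*b^0*c^2*(1-y^2)" using ab grp by (intro mult_nonneg_nonneg) (simp_all add: ab grp)
  have n16: "0 \<le> a^1*b^1*c^1*(z+x*y)" using ab grp by (intro mult_nonneg_nonneg) (simp_all add: ab grp)
  have n17: "0 \<le> a^0*b^2*c^1*(y+x*z)" using ab grp by (intro mult_nonneg_nonneg) (simp_all add: ab grp)
  have n18: "0 \<le> a^0*b^1*c^2*(x+y*z)" using ab grp by (intro mult_nonneg_nonneg) (simp_all add: ab grp)
  have n19: "0 \<le> a^3*b^2*c^2*KW x y z" using ab grp by (intro mult_nonneg_nonneg) (simp_all add: ab grp)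
  show ?thesis unfolding Wg_def using t0 t1 t2 t3 t4 t5 t6 t7 t8 t9 t10 t11 t12 t13 t14 t15 t16 t17 t18 t19 by linarith
qed

lemma Wg_lower: "Wg a b c x y z \<ge> a^3*b^2*c^2*KW x y z"
proof -
  note grp = groups us
  have t0: "a^4*b^3*c^2*(x+y*z) \<le> 2" by (rule mg[OF mono1[of a b c 4 3 2]]) (simp_all add: ab grp)
  have t1: "a^4*b^2*c^3*(y+x*z) \<le> 2" by (rule mg[OF mono1[of a b c 4 2 3]]) (simp_all add: ab grp)
  have t2: "a^3*b^4*c^2*(1-y^2) \<le> 1" by (rule mg[OF mono1[of a b c 3 4 2]]) (simp_all add: ab grp)
  have t3: "a^3*b^2*c^4*(1-x^2) \<le> 1" by (rule mg[OF mono1[of a b c 3 2 4]]) (simp_all add: ab grp)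
  have t4: "a^3*b^3*c^3*(z+x*y) \<le> 2" by (rule mg[OF mono1[of a b c 3 3 3]]) (simp_all add: ab grp)
  have t5: "a^3*b^3*c^1*(z+x*y) \<le> 2" by (rule mg[OF mono1[of a b c 3 3 1]]) (simp_all add: ab grp)
  have t6: "a^2*b^3*c^2*(x+y*z) \<le> 2" by (rule mg[OF mono1[of a b c 2 3 2]]) (simp_all add: ab grp)
  have t7: "a^2*b^2*c^3*(y+x*z) \<le> 2" by (rule mg[OF mono1[of a b c 2 2 3]]) (simp_all add: ab grp)
  have t8: "a^2*b^2*c^1*(y+x*z) \<le> 2" by (rule mg[OF mono1[of a b c 2 2 1]]) (simp_all add: ab grp)
  have t9: "a^2*b^1*c^2*(x+y*z) \<le> 2" by (rule mg[OF mono1[of a b c 2 1 2]]) (simp_all add: ab grp)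
  have t10: "a^3*b^1*c^3*(z+x*y) \<le> 2" by (rule mg[OF mono1[of a b c 3 1 3]]) (simp_all add: ab grp)
  have t11: "a^1*b^3*c^1*(z+x*y) \<le> 2" by (rule mg[OF mono1[of a b c 1 3 1]]) (simp_all add: ab grp)
  have t12: "a^1*b^1*c^3*(z+x*y) \<le> 2" by (rule mg[OF mono1[of a b c 1 1 3]]) (simp_all add: ab grp)
  have t13: "a^1*b^2*c^2*KW x y z \<le> 8" by (rule mg[OF mono1[of a b c 1 2 2]]) (simp_all add: ab grp)
  have t14: "a^1*b^2*c^0*(1-x^2) \<le> 1" by (rule mg[OF mono1[of a b c 1 2 0]]) (simp_all add: ab grp)
  have t15: "a^1*b^0*c^2*(1-y^2) \<le> 1" by (rule mg[OF mono1[of a b c 1 0 2]]) (simp_all add: ab grp)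
  have t16: "a^1*b^1*c^1*(z+x*y) \<le> 2" by (rule mg[OF mono1[of a b c 1 1 1]]) (simp_all add: ab grp)
  have t17: "a^0*b^2*c^1*(y+x*z) \<le> 2" by (rule mg[OF mono1[of a b c 0 2 1]]) (simp_all add: ab grp)
  have t18: "a^0*b^1*c^2*(x+y*z) \<le> 2" by (rule mg[OF mono1[of a b c 0 1 2]]) (simp_all add: ab grp)
  have t19: "a^3*b^2*c^2*KW x y z \<le> 8" by (rule mg[OF mono1[of a b c 3 2 2]]) (simp_all add: ab grp)
  have n0: "0 \<le> a^4*b^3*c^2*(x+y*z)" using ab grp by (intro mult_nonneg_nonneg) (simp_all add: ab grp)
  have n1: "0 \<le> a^4*b^2*c^3*(y+x*z)" using ab grp by (intro mult_nonneg_nonneg) (simp_all add: ab grp)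
  have n2: "0 \<le> a^3*b^4*c^2*(1-y^2)" using ab grp by (intro mult_nonneg_nonneg) (simp_all add: ab grp)
  have n3: "0 \<le> a^3*b^2*c^4*(1-x^2)" using ab grp by (intro mult_nonneg_nonneg) (simp_all add: ab grp)
  have n4: "0 \<le> a^3*b^3*c^3*(z+x*y)" using ab grp by (intro mult_nonneg_nonneg) (simp_all add: ab grp)
  have n5: "0 \<le> a^3*b^3*c^1*(z+x*y)" using ab grp by (intro mult_nonneg_nonneg) (simp_all add: ab grp)
  have n6: "0 \<le> a^2*b^3*c^2*(x+y*z)" using ab grp by (intro mult_nonneg_nonneg) (simp_all add: ab grp)
  have n7: "0 \<le> a^2*b^2*c^3*(y+x*z)" using ab grp by (intro mult_nonneg_nonneg) (simp_all add: ab grp)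
  have n8: "0 \<le> a^2*b^2*c^1*(y+x*z)" using ab grp by (intro mult_nonneg_nonneg) (simp_all add: ab grp)
  have n9: "0 \<le> a^2*b^1*c^2*(x+y*z)" using ab grp by (intro mult_nonneg_nonneg) (simp_all add: ab grp)
  have n10: "0 \<le> a^3*b^1*c^3*(z+x*y)" using ab grp by (intro mult_nonneg_nonneg) (simp_all add: ab grp)
  have n11: "0 \<le> a^1*b^3*c^1*(z+x*y)" using ab grp by (intro mult_nonneg_nonneg) (simp_all add: ab grp)
  have n12: "0 \<le> a^1*b^1*c^3*(z+x*y)" using ab grp by (intro mult_nonneg_nonneg) (simp_all add: ab grp)
  have n13: "0 \<le> a^1*b^2*c^2*KW x y z" using ab grp by (intro mult_nonneg_nonneg) (simp_all add: ab grp)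
  have n14: "0 \<le> a^1*b^2*c^0*(1-x^2)" using ab grp by (intro mult_nonneg_nonneg) (simp_all add: ab grp)
  have n15: "0 \<le> a^1*b^0*c^2*(1-y^2)" using ab grp by (intro mult_nonneg_nonneg) (simp_all add: ab grp)
  have n16: "0 \<le> a^1*b^1*c^1*(z+x*y)" using ab grp by (intro mult_nonneg_nonneg) (simp_all add: ab grp)
  have n17: "0 \<le> a^0*b^2*c^1*(y+x*z)" using ab grp by (intro mult_nonneg_nonneg) (simp_all add: ab grp)
  have n18: "0 \<le> a^0*b^1*c^2*(x+y*z)" using ab grp by (intro mult_nonneg_nonneg) (simp_all add: ab grp)
  have n19: "0 \<le> a^3*b^2*c^2*KW x y z" using ab grp by (intro mult_nonneg_nonneg) (simp_all add: ab grp)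
  show ?thesis unfolding Wg_def using n0 n1 n2 n3 n4 n5 n6 n7 n8 n9 n10 n11 n12 n13 n14 n15 n16 n17 n18 n19 by linarith
qed

lemma SS_bounds: "0 \<le> SS a b c x y z \<and> SS a b c x y z \<le> 10"
proof -
  note grp = groups us
  have q: "0 \<le> qq a" "qq a \<le> 2" "0 \<le> qq b" "qq b \<le> 2" "0 \<le> qq c" "qq c \<le> 2"
    unfolding qq_def using ab by (auto intro!: power_le_one)
  have m: "0 \<le> b*c \<and> b*c \<le> 1" "0 \<le> a*c \<and> a*c \<le> 1" "0 \<le> a*b \<and> a*b \<le> 1"
    using ab by (auto intro!: mult_le_one)
  have e1: "0 \<le> qq a*(y+x*z)" "qq a*(y+x*z) \<le> 4" using q grp mult_mono[of "qq a" 2 "y+x*z" 2] by auto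
  have e2: "0 \<le> qq b*(z+x*y)" "qq b*(z+x*y) \<le> 4" using q grp mult_mono[of "qq b" 2 "z+x*y" 2] by auto
  have e3: "0 \<le> qq c*(1-x^2)" "qq c*(1-x^2) \<le> 2" using q grp mult_mono[of "qq c" 2 "1-x^2" 1] by auto
  have f1: "b*c*(qq a*(y+x*z)) \<le> 4" "0 \<le> b*c*(qq a*(y+x*z))" using mg[OF m(1) e1] e1 m(1) by auto
  have f2: "a*c*(qq b*(z+x*y)) \<le> 4" "0 \<le> a*c*(qq b*(z+x*y))" using mg[OF m(2) e2] e2 m(2) by auto
  have f3: "a*b*(qq c*(1-x^2)) \<le> 2" "0 \<le> a*b*(qq c*(1-x^2))" using mg[OF m(3) e3] e3 m(3) by auto
  have "SS a b c x y z = b*c*(qq a*(y+x*z)) + a*c*(qq b*(z+x*y)) + a*b*(qq c*(1-x^2))"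
    unfolding SS_def by (simp add: mult.assoc)
  then show ?thesis using f1 f2 f3 by linarith
qed

end





lemma GG_sym1: "GG b a c x z y = GG a b c x y z"
  unfolding GG_def NN_def pp_def qq_def by algebra
lemma GG_sym2: "GG c a b y z x = GG a b c x y z"
  unfolding GG_def NN_def pp_def qq_def by algebra
lemma SS_sym1: "SS b a c x z y = SS a b c x y z"
  unfolding SS_def by algebra
lemma SS_sym2: "SS c a b y z x = SS a c b y x z"
  unfolding SS_def by algebra
lemma MM_sym: "MM b a x = MM a b x"
  unfolding MM_def EE_def FF_def by algebra

lemma own_id2:
  "a * (-(2*MM a b x*MM a c y*Xa a b c x y z - XX a b c x y z*(Ma a b x*MM a c y + MM a b x*Ma a c y)))
   + pp a * (32*a*b*pp a*pp b*SS a b c x y z*MM a c y + 32*a*c*pp a*pp c*SS a c b y x z*MM a b x)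
   = - pp a * a * EE a b x * EE a c y * 256 * Wg a b c x y z"
  unfolding MM_def XX_def SS_def NN_def EE_def FF_def qq_def pp_def Wg_def KW_def Xa_def Ma_def
  by algebra


lemma combo_field1:
  fixes nm S1 S2 M1 M2 gS pa pb pc a b c :: real
  assumes "M1 \<noteq> 0" "M2 \<noteq> 0" "gS \<noteq> 0" "pa \<noteq> 0"
  shows "a * (nm / (2*M1*M2*gS*pa)) + a * (16*b*pb*pa*S1 / (M1 *gS)) + a * (16*c*pc*pa*S2 / (M2 *gS))
     = (a * nm + pa * (32*a*b*pa*pb*S1*M2 + 32*a*c*pa*pc*S2*M1)) / (2*M1*M2*gS*pa)"
  using assms by (simp add: field_simps)

lemma combo_field2:
  fixes E1 E2 F1 F2 gS pa a W :: real
  assumes "E1 \<noteq> 0" "E2 \<noteq> 0" "F1 \<noteq> 0" "F2 \<noteq> 0" "gS \<noteq> 0" "pa \<noteq> 0"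
  shows "(- pa * a * E1 * E2 * 256 * W) / (2*(4*E1*F1)*(4*E2*F2)*gS*pa) = -(8*a*W / (F1*F2*gS))"
  using assms by (simp add: field_simps)


lemma combo_all:
  fixes nm S1 S2 M1 M2 gS pa pb pc a b c E1 E2 F1 F2 W :: real
  assumes id: "a * nm + pa * (32*a*b*pa*pb*S1*M2 + 32*a*c*pa*pc*S2*M1) = - pa * a * E1 * E2 * 256 * W"
    and m1: "M1 = 4*E1*F1" and m2: "M2 = 4*E2*F2"
    and nz: "E1 \<noteq> 0" "E2 \<noteq> 0" "F1 \<noteq> 0" "F2 \<noteq> 0" "gS \<noteq> 0" "pa \<noteq> 0"
  shows "-(a * (nm / (2*M1*M2*gS*pa)) + a * (16*b*pb*pa*S1 / (M1 *gS)) + a * (16*c*pc*pa*S2 / (M2 *gS)))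
     = 8*a*W / (F1*F2*gS)"
proof -
  have M: "M1 \<noteq> 0" "M2 \<noteq> 0" using m1 m2 nz by auto
  have "a * (nm / (2*M1*M2*gS*pa)) + a * (16*b*pb*pa*S1 / (M1 *gS)) + a * (16*c*pc*pa*S2 / (M2 *gS))
     = (a * nm + pa * (32*a*b*pa*pb*S1*M2 + 32*a*c*pa*pc*S2*M1)) / (2*M1*M2*gS*pa)"
    by (rule combo_field1) (use M nz in auto)
  also have "\<dots> = (- pa * a * E1 * E2 * 256 * W) / (2*M1*M2*gS*pa)"
    by (simp only: id)
  also have "\<dots> = (- pa * a * E1 * E2 * 256 * W) / (2*(4*E1*F1)*(4*E2*F2)*gS*pa)"
    by (simp only: m1 m2)
  also have "\<dots> = -(8*a*W / (F1*F2*gS))"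
    by (rule combo_field2) (use nz in auto)
  finally show ?thesis by simp
qed

lemma A_combo:
  assumes M1: "MM a b x > 0" and M2: "MM a c y > 0" and G: "GG a b c x y z > 0" and pa: "pp a > 0"
    and E1: "EE a b x > 0" and E2: "EE a c y > 0"
  shows "-(a * (-(2*MM a b x*MM a c y*Xa a b c x y z - XX a b c x y z*(Ma a b x*MM a c y + MM a b x*Ma a c y))
       / (2*MM a b x*MM a c y * sqrt (GG a b c x y z)*pp a))
     + a * (16*b*pp b*pp a*SS b a c x z y / (MM b a x * sqrt (GG b a c x z y)))
     + a * (16*c*pp c*pp a*SS c a b y z x / (MM c a y * sqrt (GG c a b y z x))))
   = 8*a*Wg a b c x y z / (FF a b x * FF a c y * sqrt (GG a b c x y z))"
proof -
  have F1: "FF a b x \<noteq> 0" and F2: "FF a c y \<noteq> 0" using M1 M2 unfolding MM_def by auto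
  have gS: "sqrt (GG a b c x y z) \<noteq> 0" using G by simp
  show ?thesis
    unfolding GG_sym1[of b a c x z y] GG_sym2[of c a b y z x] SS_sym1[of b a c x z y] SS_sym2[of c a b y z x] MM_sym[of b a x] MM_sym[of c a y]
    by (rule combo_all[OF own_id2 MM_def MM_def]) (use E1 E2 F1 F2 gS pa in auto)
qed

lemma face_B_deriv:
  assumes d: "i \<noteq> j" "i \<noteq> k" "j \<noteq> k" and neg: "u i < 0" "u j < 0" "u k < 0"
    and cx: "cos (\<Phi> {i,j}) > -1" and cy: "cos (\<Phi> {i,k}) > -1"
    and G: "GG (exp (u i)) (exp (u j)) (exp (u k)) (cos (\<Phi> {i,j})) (cos (\<Phi> {i,k})) (cos (\<Phi> {j,k})) > 0"
  shows "((\<lambda>s. angle_u \<Phi> (u(j:=s)) {i,j,k} i) has_real_derivative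
     (16*exp (u i)*exp (u j)*pp (exp (u i))*pp (exp (u j))
        * SS (exp (u i)) (exp (u j)) (exp (u k)) (cos (\<Phi> {i,j})) (cos (\<Phi> {i,k})) (cos (\<Phi> {j,k}))
      / (MM (exp (u i)) (exp (u j)) (cos (\<Phi> {i,j}))
         * sqrt (GG (exp (u i)) (exp (u j)) (exp (u k)) (cos (\<Phi> {i,j})) (cos (\<Phi> {i,k})) (cos (\<Phi> {j,k})))))) (at (u j))"
proof -
  define a where "a = exp (u i)"
  define b where "b = exp (u j)"
  define c where "c = exp (u k)"
  define x where "x = cos (\<Phi> {i,j})"
  define y where "y = cos (\<Phi> {i,k})"
  define z where "z = cos (\<Phi> {j,k})"
  have a0: "0 < a" "a < 1" and b0: "0 < b" "b < 1" and c0: "0 < c" "c < 1"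
    using neg by (auto simp: a_def b_def c_def)
  have pa: "pp a > 0" using a0 pp_pos by auto
  have M1: "MM a b x > 0" using MM_pos a0 b0 cx by (simp add: x_def)
  have M2: "MM a c y > 0" using MM_pos a0 c0 cy by (simp add: y_def)
  have G': "GG a b c x y z > 0" using G by (simp add: a_def b_def c_def x_def y_def z_def)
  have D: "((\<lambda>t. arccos (Cf a t c x y z)) has_real_derivative
     (16*a*pp a*pp b*SS a b c x y z / (MM a b x * sqrt (GG a b c x y z)))) (at b)"
    by (rule D_cross[OF M1 M2 G' pa])
  have D2: "((\<lambda>s. arccos (Cf a (exp s) c x y z)) has_real_derivative
     (16*a*pp a*pp b*SS a b c x y z / (MM a b x * sqrt (GG a b c x y z))) * exp (u j)) (at (u j))"
    using DERIV_chain2[OF D[unfolded b_def] DERIV_exp] unfolding b_def by simp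
  have eq: "arccos (Cf a (exp s) c x y z) = angle_u \<Phi> (u(j:=s)) {i,j,k} i" if "s \<in> {s. s < 0}" for s
    using angle_formula[of i j k "u(j:=s)" \<Phi>] d neg that cx cy
    by (simp add: a_def c_def x_def y_def z_def)
  have "((\<lambda>s. angle_u \<Phi> (u(j:=s)) {i,j,k} i) has_real_derivative
     (16*a*pp a*pp b*SS a b c x y z / (MM a b x * sqrt (GG a b c x y z))) * exp (u j)) (at (u j))"
    by (rule has_field_derivative_transform_within_open[where S="{s::real. s < 0}", OF D2 _ _ eq]) (use neg in \<open>auto simp flip: lessThan_def\<close>)
  then show ?thesis
    by (rule DERIV_cong) (simp add: a_def b_def c_def x_def y_def z_def field_simps)
qed

lemma resh: "(0::real) - (P*a + (Q*a + R*a)) = -(a*P + a*Q + a*R)"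
  by (simp add: algebra_simps)

lemma face_A_deriv:
  assumes d: "i \<noteq> j" "i \<noteq> k" "j \<noteq> k" and neg: "u i < 0" "u j < 0" "u k < 0"
    and cx: "cos (\<Phi> {i,j}) > -1" and cy: "cos (\<Phi> {i,k}) > -1" and cz: "cos (\<Phi> {j,k}) > -1"
    and G: "GG (exp (u i)) (exp (u j)) (exp (u k)) (cos (\<Phi> {i,j})) (cos (\<Phi> {i,k})) (cos (\<Phi> {j,k})) > 0"
  shows "((\<lambda>s. area_u \<Phi> (u(i:=s)) {i,j,k}) has_real_derivative
     (8*exp (u i)*Wg (exp (u i)) (exp (u j)) (exp (u k)) (cos (\<Phi> {i,j})) (cos (\<Phi> {i,k})) (cos (\<Phi> {j,k}))
      / (FF (exp (u i)) (exp (u j)) (cos (\<Phi> {i,j})) * FF (exp (u i)) (exp (u k)) (cos (\<Phi> {i,k}))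
         * sqrt (GG (exp (u i)) (exp (u j)) (exp (u k)) (cos (\<Phi> {i,j})) (cos (\<Phi> {i,k})) (cos (\<Phi> {j,k})))))) (at (u i))"
proof -
  define a where "a = exp (u i)"
  define b where "b = exp (u j)"
  define c where "c = exp (u k)"
  define x where "x = cos (\<Phi> {i,j})"
  define y where "y = cos (\<Phi> {i,k})"
  define z where "z = cos (\<Phi> {j,k})"
  have a0: "0 < a" "a < 1" and b0: "0 < b" "b < 1" and c0: "0 < c" "c < 1"
    using neg by (auto simp: a_def b_def c_def)
  have pa: "pp a > 0" and pb: "pp b > 0" and pc: "pp c > 0" using a0 b0 c0 pp_pos by auto
  have x1: "x > -1" and y1: "y > -1" and z1: "z > -1" using cx cy cz by (simp_all add: x_def y_def z_def)
  have Mab: "MM a b x > 0" using MM_pos a0 b0 x1 by simp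
  have Mac: "MM a c y > 0" using MM_pos a0 c0 y1 by simp
  have Mbc: "MM b c z > 0" using MM_pos b0 c0 z1 by simp
  have Mba: "MM b a x > 0" using Mab MM_sym[of b a x] by simp
  have Mca: "MM c a y > 0" using Mac MM_sym[of c a y] by simp
  have Mcb: "MM c b z > 0" using Mbc MM_sym[of c b z] by simp
  have G': "GG a b c x y z > 0" using G by (simp add: a_def b_def c_def x_def y_def z_def)
  have Gj: "GG b a c x z y > 0" using G' GG_sym1[of b a c x z y] by simp
  have Gk: "GG c a b y z x > 0" using G' GG_sym2[of c a b y z x] by simp
  have E1: "EE a b x > 0" using Mab unfolding MM_def
    using EE_nonneg[of x a b] a0 b0 x1 by (auto simp: zero_less_mult_iff)
  have E2: "EE a c y > 0" using Mac unfolding MM_def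
    using EE_nonneg[of y a c] a0 c0 y1 by (auto simp: zero_less_mult_iff)
  have Di: "((\<lambda>t. arccos (Cf t b c x y z)) has_real_derivative
     (-(2*MM a b x*MM a c y*Xa a b c x y z - XX a b c x y z*(Ma a b x*MM a c y + MM a b x*Ma a c y))
       / (2*MM a b x*MM a c y * sqrt (GG a b c x y z)*pp a))) (at a)"
    by (rule D_own[OF Mab Mac G' pa])
  have Dj: "((\<lambda>t. arccos (Cf b t c x z y)) has_real_derivative
     (16*b*pp b*pp a*SS b a c x z y / (MM b a x * sqrt (GG b a c x z y)))) (at a)"
    by (rule D_cross[OF Mba Mbc Gj pb])
  have Dk: "((\<lambda>t. arccos (Cf c t b y z x)) has_real_derivative
     (16*c*pp c*pp a*SS c a b y z x / (MM c a y * sqrt (GG c a b y z x)))) (at a)"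
    by (rule D_cross[OF Mca Mcb Gk pc])
  note Di2 = DERIV_chain2[OF Di[unfolded a_def] DERIV_exp, folded a_def]
  note Dj2 = DERIV_chain2[OF Dj[unfolded a_def] DERIV_exp, folded a_def]
  note Dk2 = DERIV_chain2[OF Dk[unfolded a_def] DERIV_exp, folded a_def]
  note Dsum = DERIV_diff[OF DERIV_const DERIV_add[OF Di2 DERIV_add[OF Dj2 Dk2]], of pi]
  have eq: "pi - (arccos (Cf (exp s) b c x y z) + (arccos (Cf b (exp s) c x z y) + arccos (Cf c (exp s) b y z x)))
        = area_u \<Phi> (u(i:=s)) {i,j,k}" if "s \<in> {s. s < 0}" for s
  proof -
    have s0: "s < 0" using that by simp
    have ti: "angle_u \<Phi> (u(i:=s)) {i,j,k} i = arccos (Cf (exp s) b c x y z)"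
      using angle_formula[of i j k "u(i:=s)" \<Phi>] d neg s0 cx cy
      by (simp add: b_def c_def x_def y_def z_def)
    have tj: "angle_u \<Phi> (u(i:=s)) {i,j,k} j = arccos (Cf b (exp s) c x z y)"
      using angle_formula[of j i k "u(i:=s)" \<Phi>] d neg s0 cx cz
      by (simp add: b_def c_def x_def y_def z_def insert_commute)
    have tk: "angle_u \<Phi> (u(i:=s)) {i,j,k} k = arccos (Cf c (exp s) b y z x)"
      using angle_formula[of k i j "u(i:=s)" \<Phi>] d neg s0 cy cz
      by (simp add: b_def c_def x_def y_def z_def insert_commute)
    have "area_u \<Phi> (u(i:=s)) {i,j,k} = pi - (angle_u \<Phi> (u(i:=s)) {i,j,k} i + (angle_u \<Phi> (u(i:=s)) {i,j,k} j + angle_u \<Phi> (u(i:=s)) {i,j,k} k))"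
      unfolding area_u_def face_area_def angle_u_def using d by simp
    then show ?thesis using ti tj tk by simp
  qed
  have "((\<lambda>s. area_u \<Phi> (u(i:=s)) {i,j,k}) has_real_derivative
     (0 - ((-(2*MM a b x*MM a c y*Xa a b c x y z - XX a b c x y z*(Ma a b x*MM a c y + MM a b x*Ma a c y))
       / (2*MM a b x*MM a c y * sqrt (GG a b c x y z)*pp a)) * a
       + ((16*b*pp b*pp a*SS b a c x z y / (MM b a x * sqrt (GG b a c x z y))) * a
       + (16*c*pp c*pp a*SS c a b y z x / (MM c a y * sqrt (GG c a b y z x))) * a)))) (at (u i))"
    by (rule has_field_derivative_transform_within_open[where S="{s::real. s < 0}", OF Dsum _ _ eq]) (use neg in \<open>auto simp flip: lessThan_def\<close>)
  then have "((\<lambda>s. area_u \<Phi> (u(i:=s)) {i,j,k}) has_real_derivative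
     (8*a*Wg a b c x y z / (FF a b x * FF a c y * sqrt (GG a b c x y z)))) (at (u i))"
    unfolding resh A_combo[OF Mab Mac G' pa E1 E2] .
  then show ?thesis by (simp add: a_def b_def c_def x_def y_def z_def)
qed

context
  fixes a b c x y z T \<delta> :: real
  assumes h: "0 < T" "T \<le> a" "a < 1" "T \<le> b" "b < 1" "T \<le> c" "c < 1"
    "0 < \<delta>" "\<delta> \<le> 1" "\<delta> - 1 \<le> x" "x \<le> 1" "\<delta> - 1 \<le> y" "y \<le> 1" "\<delta> - 1 \<le> z" "z \<le> 1"
    and hu: "0 \<le> x + y*z" "0 \<le> y + x*z" "0 \<le> z + x*y"
begin

lemma basic: "0 \<le> a" "a \<le> 1" "0 \<le> b" "b \<le> 1" "0 \<le> c" "c \<le> 1"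
    "-1 \<le> x" "x \<le> 1" "-1 \<le> y" "y \<le> 1" "-1 \<le> z" "z \<le> 1"
  using h by auto

lemma ppb: "0 < pp a" "pp a \<le> 1" "0 < pp b" "pp b \<le> 1" "0 < pp c" "pp c \<le> 1"
  using h pp_pos[of a] pp_pos[of b] pp_pos[of c] unfolding pp_def by auto

lemma T2le: "T^2 \<le> a*b" "T^2 \<le> a*c"
  using h mult_mono[of T a T b] mult_mono[of T a T c] by (auto simp: power2_eq_square)

lemma FF_bnds: "2*T^2*\<delta> \<le> FF a b x" "FF a b x \<le> 4" "2*T^2*\<delta> \<le> FF a c y" "FF a c y \<le> 4"
  "2*T^2*\<delta> \<le> EE a b x" "2*T^2*\<delta> \<le> EE a c y"
proof -
  have ab1: "a*b \<le> 1" "a*c \<le> 1" "0 \<le> a*b" "0 \<le> a*c" using basic by (auto intro: mult_le_one)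
  have m1: "T^2*\<delta> \<le> a*b*(1+x)" using mult_mono[of "T^2" "a*b" \<delta> "1+x"] T2le h by auto
  have m2: "T^2*\<delta> \<le> a*c*(1+y)" using mult_mono[of "T^2" "a*c" \<delta> "1+y"] T2le h by auto
  show "2*T^2*\<delta> \<le> FF a b x" using FF_lower[of a b x] basic m1 by linarith
  show "2*T^2*\<delta> \<le> FF a c y" using FF_lower[of a c y] basic m2 by linarith
  show "2*T^2*\<delta> \<le> EE a b x" using EE_lower[of a b x] basic m1 by linarith
  show "2*T^2*\<delta> \<le> EE a c y" using EE_lower[of a c y] basic m2 by linarith
  have sq: "a^2*b^2 \<le> 1" "a^2*c^2 \<le> 1" using ab1 by (simp_all add: power_mult_distrib[symmetric] power_le_one)
  have "a*b*x \<le> a*b" "a*c*y \<le> a*c" using ab1 basic by (auto intro: mult_left_le)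
  then have "a*b*x \<le> 1" "a*c*y \<le> 1" using ab1 by auto
  then show "FF a b x \<le> 4" "FF a c y \<le> 4" unfolding FF_def using sq by auto
qed

lemma G_lo: "GG a b c x y z \<ge> 32*T^6*\<delta>^2"
proof -
  have K: "Kf x y z \<ge> \<delta>^2" using Kf_lower[of \<delta> x y z] h by auto
  have m: "T^6 \<le> a^2*b^2*c^2"
  proof -
    have "T^2 \<le> a^2" "T^2 \<le> b^2" "T^2 \<le> c^2" using h by (auto intro: power_mono)
    then have "T^2*T^2*T^2 \<le> a^2*b^2*c^2" by (intro mult_mono) auto
    then show ?thesis by (simp add: power_add[symmetric])
  qed
  have "T^6*\<delta>^2 \<le> a^2*b^2*c^2*Kf x y z" using mult_mono[OF m K] h by auto
  moreover have "Gg a b c x y z \<ge> 2*(a^2*b^2*c^2*Kf x y z)" by (rule Gg_lower[OF basic hu])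
  ultimately show ?thesis unfolding GG_eq by linarith
qed

lemma G_hi: "GG a b c x y z \<le> 1120"
  using Gg_upper[OF basic hu] unfolding GG_eq by linarith

lemma G_pos: "GG a b c x y z > 0"
proof -
  have "32*T^6*\<delta>^2 > 0" using h by simp
  then show ?thesis using G_lo by linarith
qed

lemma B_bnd:
  "0 \<le> 16*a*b*pp a*pp b*SS a b c x y z / (MM a b x * sqrt (GG a b c x y z))
   \<and> 16*a*b*pp a*pp b*SS a b c x y z / (MM a b x * sqrt (GG a b c x y z)) \<le> 10 / (T^4*\<delta>^2 * sqrt (32*T^6*\<delta>^2))"
proof -
  have S: "0 \<le> SS a b c x y z" "SS a b c x y z \<le> 10" using SS_bounds[OF basic hu] by auto
  have p: "0 \<le> a*b*pp a*pp b" "a*b*pp a*pp b \<le> 1" using basic ppb by (auto intro!: mult_le_one)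
  have N: "0 \<le> 16*a*b*pp a*pp b*SS a b c x y z" "16*a*b*pp a*pp b*SS a b c x y z \<le> 160"
  proof -
    have "(a*b*pp a*pp b)*SS a b c x y z \<le> 10" using mg[of "a*b*pp a*pp b"] p S by auto
    moreover have "0 \<le> (a*b*pp a*pp b)*SS a b c x y z" using p S by simp
    ultimately show "0 \<le> 16*a*b*pp a*pp b*SS a b c x y z" "16*a*b*pp a*pp b*SS a b c x y z \<le> 160"
      by (simp_all add: mult.assoc)
  qed
  have M: "16*T^4*\<delta>^2 \<le> MM a b x"
  proof -
    have Tp: "0 < 2*T^2*\<delta>" using h by simp
    have "(2*T^2*\<delta>)*(2*T^2*\<delta>) \<le> EE a b x * FF a b x"
      using FF_bnds h Tp by (intro mult_mono) (auto intro: order_trans[OF less_imp_le[OF Tp]])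
    then show ?thesis unfolding MM_def by (simp add: power2_eq_square power4_eq_xxxx algebra_simps)
  qed
  have sG: "sqrt (32*T^6*\<delta>^2) \<le> sqrt (GG a b c x y z)" using G_lo by simp
  have sp: "0 < sqrt (32*T^6*\<delta>^2)" using h by simp
  have Dlo: "16*T^4*\<delta>^2 * sqrt (32*T^6*\<delta>^2) \<le> MM a b x * sqrt (GG a b c x y z)"
  proof -
    have "0 < 16*T^4*\<delta>^2" using h by simp
    then have "0 \<le> MM a b x" using M by linarith
    then show ?thesis using M sG sp h by (intro mult_mono) auto
  qed
  have Dp: "0 < 16*T^4*\<delta>^2 * sqrt (32*T^6*\<delta>^2)" using h sp by simp
  have "16*a*b*pp a*pp b*SS a b c x y z / (MM a b x * sqrt (GG a b c x y z)) \<le> 160 / (16*T^4*\<delta>^2 * sqrt (32*T^6*\<delta>^2))"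
    by (rule frac_le) (use N Dlo Dp in auto)
  also have "\<dots> = 10 / (T^4*\<delta>^2 * sqrt (32*T^6*\<delta>^2))" by simp
  moreover have "0 \<le> 16*a*b*pp a*pp b*SS a b c x y z / (MM a b x * sqrt (GG a b c x y z))"
  proof -
    have "0 \<le> MM a b x * sqrt (GG a b c x y z)" using Dlo Dp by linarith
    then show ?thesis using N(1) by (rule divide_nonneg_nonneg[rotated])
  qed
  ultimately show ?thesis by simp
qed

lemma A_bnd:
  "8*T^8*\<delta>^2 / (16 * sqrt 1120) \<le> 8*a*Wg a b c x y z / (FF a b x * FF a c y * sqrt (GG a b c x y z))
   \<and> 8*a*Wg a b c x y z / (FF a b x * FF a c y * sqrt (GG a b c x y z)) \<le> 544 / ((2*T^2*\<delta>)^2 * sqrt (32*T^6*\<delta>^2))"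
proof -
  have W: "Wg a b c x y z \<le> 68" by (rule Wg_upper[OF basic hu])
  have W2: "Wg a b c x y z \<ge> a^3*b^2*c^2*KW x y z" by (rule Wg_lower[OF basic hu])
  have K: "KW x y z \<ge> \<delta>^2" using Kf_lower[of \<delta> x y z] groups[OF basic hu] h by auto
  have m: "T^7 \<le> a^3*b^2*c^2"
  proof -
    have "T^3 \<le> a^3" "T^2 \<le> b^2" "T^2 \<le> c^2" using h by (auto intro: power_mono)
    then have "T^3*T^2*T^2 \<le> a^3*b^2*c^2" using h by (intro mult_mono) auto
    then show ?thesis by (simp add: power_add[symmetric])
  qed
  have Wlo: "T^7*\<delta>^2 \<le> Wg a b c x y z" using mult_mono[OF m K] h W2 by auto
  have Nlo: "8*T^8*\<delta>^2 \<le> 8*a*Wg a b c x y z"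
  proof -
    have "T*(T^7*\<delta>^2) \<le> a * Wg a b c x y z" using mult_mono[OF _ Wlo] h by auto
    then show ?thesis by (simp add: power_Suc[symmetric] mult.assoc[symmetric])
  qed
  have Nhi: "8*a*Wg a b c x y z \<le> 544"
  proof -
    have "0 \<le> T^7*\<delta>^2" using h by simp
    then have "0 \<le> Wg a b c x y z" using Wlo by linarith
    then have "a * Wg a b c x y z \<le> 1 * 68" using h W by (intro mult_mono) auto
    then show ?thesis by simp
  qed
  have N0: "0 \<le> 8*a*Wg a b c x y z" using Nlo h by (smt (verit) zero_le_power zero_le_mult_iff)
  have F: "2*T^2*\<delta> \<le> FF a b x" "FF a b x \<le> 4" "2*T^2*\<delta> \<le> FF a c y" "FF a c y \<le> 4" using FF_bnds by auto
  have Tp: "0 < 2*T^2*\<delta>" using h by simp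
  have F0: "0 \<le> FF a b x" "0 \<le> FF a c y"
    by (rule order_trans[OF less_imp_le[OF Tp] F(1)], rule order_trans[OF less_imp_le[OF Tp] F(3)])
  have sG: "sqrt (32*T^6*\<delta>^2) \<le> sqrt (GG a b c x y z)" "sqrt (GG a b c x y z) \<le> sqrt 1120" using G_lo G_hi by auto
  have sp: "0 < sqrt (32*T^6*\<delta>^2)" using h by simp
  have Dlo: "(2*T^2*\<delta>)^2 * sqrt (32*T^6*\<delta>^2) \<le> FF a b x * FF a c y * sqrt (GG a b c x y z)"
  proof -
    have "(2*T^2*\<delta>)*(2*T^2*\<delta>) \<le> FF a b x * FF a c y" by (rule mult_mono[OF F(1) F(3) F0(1) less_imp_le[OF Tp]])
    then show ?thesis using sG sp Tp F0 by (intro mult_mono) (auto simp: power2_eq_square)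
  qed
  have Dhi: "FF a b x * FF a c y * sqrt (GG a b c x y z) \<le> 16 * sqrt 1120"
  proof -
    have "FF a b x * FF a c y \<le> 4*4" by (rule mult_mono[OF F(2) F(4) _ F0(2)]) simp
    moreover have "0 \<le> sqrt (GG a b c x y z)" using G_pos by simp
    ultimately have "FF a b x * FF a c y * sqrt (GG a b c x y z) \<le> (4*4) * sqrt 1120"
      by (intro mult_mono[OF _ sG(2)]) auto
    then show ?thesis by simp
  qed
  have Dp: "0 < (2*T^2*\<delta>)^2 * sqrt (32*T^6*\<delta>^2)" using mult_pos_pos[OF zero_less_power[OF Tp, of 2] sp] .
  have D0: "0 < FF a b x * FF a c y * sqrt (GG a b c x y z)" using Dp Dlo by linarith
  have l: "8*T^8*\<delta>^2 / (16 * sqrt 1120) \<le> 8*a*Wg a b c x y z / (FF a b x * FF a c y * sqrt (GG a b c x y z))"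
    by (rule frac_le) (use N0 Nlo D0 Dhi in auto)
  have u: "8*a*Wg a b c x y z / (FF a b x * FF a c y * sqrt (GG a b c x y z)) \<le> 544 / ((2*T^2*\<delta>)^2 * sqrt (32*T^6*\<delta>^2))"
    by (rule frac_le) (use N0 Nhi Dp Dlo in auto)
  show ?thesis using l u by simp
qed

end

lemma face_A_full:
  assumes d: "i \<noteq> j" "i \<noteq> k" "j \<noteq> k" and neg: "u i < 0" "u j < 0" "u k < 0"
    and tb: "T \<le> exp (u i)" "T \<le> exp (u j)" "T \<le> exp (u k)" and T: "0 < T"
    and dl: "0 < \<delta>" "\<delta> \<le> 1"
    and cb: "\<delta> - 1 \<le> cos (\<Phi> {i,j})" "\<delta> - 1 \<le> cos (\<Phi> {i,k})" "\<delta> - 1 \<le> cos (\<Phi> {j,k})"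
    and st: "0 \<le> cos (\<Phi> {i,j}) + cos (\<Phi> {i,k}) * cos (\<Phi> {j,k})"
      "0 \<le> cos (\<Phi> {i,k}) + cos (\<Phi> {i,j}) * cos (\<Phi> {j,k})"
      "0 \<le> cos (\<Phi> {j,k}) + cos (\<Phi> {i,j}) * cos (\<Phi> {i,k})"
  shows "\<exists>d. ((\<lambda>s. area_u \<Phi> (u(i:=s)) {i,j,k}) has_real_derivative d) (at (u i))
     \<and> 8*T^8*\<delta>^2 / (16 * sqrt 1120) \<le> d \<and> d \<le> 544 / ((2*T^2*\<delta>)^2 * sqrt (32*T^6*\<delta>^2))"
proof -
  have e1: "exp (u i) < 1" "exp (u j) < 1" "exp (u k) < 1" using neg by auto
  note hh = T tb(1) e1(1) tb(2) e1(2) tb(3) e1(3) dl cb(1) cos_le_one cb(2) cos_le_one cb(3) cos_le_one st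
  have G: "GG (exp (u i)) (exp (u j)) (exp (u k)) (cos (\<Phi> {i,j})) (cos (\<Phi> {i,k})) (cos (\<Phi> {j,k})) > 0"
    by (rule G_pos[OF hh])
  have c1: "cos (\<Phi> {i,j}) > -1" "cos (\<Phi> {i,k}) > -1" "cos (\<Phi> {j,k}) > -1" using cb dl by auto
  show ?thesis
    using face_A_deriv[OF d neg c1 G] A_bnd[OF hh] by blast
qed

lemma face_B_full:
  assumes d: "i \<noteq> j" "i \<noteq> k" "j \<noteq> k" and neg: "u i < 0" "u j < 0" "u k < 0"
    and tb: "T \<le> exp (u i)" "T \<le> exp (u j)" "T \<le> exp (u k)" and T: "0 < T"
    and dl: "0 < \<delta>" "\<delta> \<le> 1"
    and cb: "\<delta> - 1 \<le> cos (\<Phi> {i,j})" "\<delta> - 1 \<le> cos (\<Phi> {i,k})" "\<delta> - 1 \<le> cos (\<Phi> {j,k})"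
    and st: "0 \<le> cos (\<Phi> {i,j}) + cos (\<Phi> {i,k}) * cos (\<Phi> {j,k})"
      "0 \<le> cos (\<Phi> {i,k}) + cos (\<Phi> {i,j}) * cos (\<Phi> {j,k})"
      "0 \<le> cos (\<Phi> {j,k}) + cos (\<Phi> {i,j}) * cos (\<Phi> {i,k})"
  shows "\<exists>d. ((\<lambda>s. angle_u \<Phi> (u(j:=s)) {i,j,k} i) has_real_derivative d) (at (u j))
     \<and> 0 \<le> d \<and> d \<le> 10 / (T^4*\<delta>^2 * sqrt (32*T^6*\<delta>^2))"
proof -
  have e1: "exp (u i) < 1" "exp (u j) < 1" "exp (u k) < 1" using neg by auto
  note hh = T tb(1) e1(1) tb(2) e1(2) tb(3) e1(3) dl cb(1) cos_le_one cb(2) cos_le_one cb(3) cos_le_one st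
  have G: "GG (exp (u i)) (exp (u j)) (exp (u k)) (cos (\<Phi> {i,j})) (cos (\<Phi> {i,k})) (cos (\<Phi> {j,k})) > 0"
    by (rule G_pos[OF hh])
  have c1: "cos (\<Phi> {i,j}) > -1" "cos (\<Phi> {i,k}) > -1" using cb dl by auto
  show ?thesis
    using face_B_deriv[OF d neg c1 G] B_bnd[OF hh] by blast
qed

lemma card3_obtain2:
  assumes "card f = 3" "i \<in> f"
  shows "\<exists>j k. i \<noteq> j \<and> i \<noteq> k \<and> j \<noteq> k \<and> f = {i,j,k}"
proof -
  obtain p q w where f: "f = {p,q,w}" "p \<noteq> q" "q \<noteq> w" "p \<noteq> w" using assms(1) card_3_iff by metis
  show ?thesis using assms(2) f by (auto simp: insert_commute)
qed

lemma card3_obtain1: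
  assumes "card f = 3" "i \<in> f" "j \<in> f" "i \<noteq> j"
  shows "\<exists>k. i \<noteq> k \<and> j \<noteq> k \<and> f = {i,j,k}"
proof -
  obtain p q w where f: "f = {p,q,w}" "p \<noteq> q" "q \<noteq> w" "p \<noteq> w" using assms(1) card_3_iff by metis
  show ?thesis using assms(2,3,4) f by (auto simp: insert_commute)
qed

lemma cos_gt_m1: "0 \<le> t \<Longrightarrow> t < pi \<Longrightarrow> cos t > -1"
  using cos_monotone_0_pi[of t pi] by simp

theorem theorem1p1:
  fixes V :: "'a set" and F :: "'a set set" and \<Phi> :: "'a set \<Rightarrow> real" and R :: real
  assumes "closed_surface_triangulation V F"
    and "\<forall>e\<in>tri_edges F. 0 \<le> \<Phi> e \<and> \<Phi> e < pi"
    and "star_condition F \<Phi>"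
    and "R > 0"
  shows "\<exists>a1 a2 a3. a1 > 0 \<and> a2 > 0 \<and> a3 > 0 \<and>
    (\<forall>r :: 'a \<Rightarrow> real. (\<forall>i\<in>V. r i \<ge> R) \<longrightarrow>
       (let u = (\<lambda>w. u_of_rad (r w)) in
         (\<forall>i\<in>V. a1 \<le> A_coef F \<Phi> u i \<and> A_coef F \<Phi> u i \<le> a2) \<and>
         (\<forall>i j. {i, j} \<in> tri_edges F \<longrightarrow>
            0 \<le> B_coef F \<Phi> u i j \<and> B_coef F \<Phi> u i j \<le> a3)))"
proof -
  have finV: "finite V" and Fsub: "\<And>f. f \<in> F \<Longrightarrow> f \<subseteq> V \<and> card f = 3"
    and cover: "\<And>v. v \<in> V \<Longrightarrow> \<exists>f\<in>F. v \<in> f" and Vne: "V \<noteq> {}"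
    using assms(1) unfolding closed_surface_triangulation_def by auto
  have finF: "finite F" using finite_subset[of F "Pow V"] Fsub finV by auto
  have Fne: "F \<noteq> {}" using Vne cover by blast
  have cardF: "card F > 0" using finF Fne by (simp add: card_gt_0_iff)
  have finE: "finite (tri_edges F)"
    using finite_subset[of "tri_edges F" "Pow V"] Fsub finV unfolding tri_edges_def by auto
  define \<delta> where "\<delta> = Min (insert 1 ((\<lambda>e. 1 + cos (\<Phi> e)) ` tri_edges F))"
  have cpos: "0 < 1 + cos (\<Phi> e)" if "e \<in> tri_edges F" for e
    using cos_gt_m1[of "\<Phi> e"] assms(2) that by auto
  have dpos: "0 < \<delta>" unfolding \<delta>_def using finE cpos
    by (subst Min_gr_iff) auto
  have dle: "\<delta> \<le> 1" unfolding \<delta>_def using finE by (intro Min_le) auto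
  have dle_e: "\<delta> - 1 \<le> cos (\<Phi> e)" if "e \<in> tri_edges F" for e
  proof -
    have "\<delta> \<le> 1 + cos (\<Phi> e)" unfolding \<delta>_def using finE that by (intro Min_le) auto
    then show ?thesis by linarith
  qed
  define T where "T = tanh (R/2)"
  have T0: "0 < T" and T1: "T < 1" using assms(4) tanh_real_lt_1 by (auto simp: T_def)
  define cAlo where "cAlo = 8*T^8*\<delta>^2 / (16 * sqrt 1120)"
  define cAhi where "cAhi = 544 / ((2*T^2*\<delta>)^2 * sqrt (32*T^6*\<delta>^2))"
  define cB where "cB = 10 / (T^4*\<delta>^2 * sqrt (32*T^6*\<delta>^2))"
  have cAlo: "cAlo > 0" unfolding cAlo_def using T0 dpos by simp
  have cAhi: "cAhi > 0" unfolding cAhi_def using T0 dpos by simp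
  have cBp: "cB > 0" unfolding cB_def using T0 dpos by simp
  have edge: "{p,q} \<in> tri_edges F" if "f \<in> F" "p \<in> f" "q \<in> f" "p \<noteq> q" for f p q
    unfolding tri_edges_def using that by auto
  have star: "0 \<le> cos (\<Phi> {p,q}) + cos (\<Phi> {p,w}) * cos (\<Phi> {q,w})" if "{p,q,w} \<in> F" for p q w
    using assms(3) that unfolding star_condition_def by blast
  show ?thesis
  proof (intro exI conjI allI impI)
    show "cAlo > 0" "real (card F) * cAhi > 0" "real (card F) * cB > 0" using cAlo cAhi cBp cardF by auto
    fix r :: "'a \<Rightarrow> real"
    assume rR: "\<forall>i\<in>V. R \<le> r i"
    define u where "u = (\<lambda>w. u_of_rad (r w))"
    have uv: "u w < 0 \<and> T \<le> exp (u w)" if "w \<in> V" for w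
    proof -
      have rw: "r w > 0" using rR that assms(4) by force
      have t0: "tanh (r w / 2) > 0" using rw by simp
      have t1: "tanh (r w / 2) < 1" by (rule tanh_real_lt_1)
      have "exp (u w) = tanh (r w / 2)" unfolding u_def u_of_rad_def using t0 by simp
      moreover have "u w < 0" unfolding u_def u_of_rad_def using t0 t1 by simp
      moreover have "T \<le> tanh (r w / 2)" unfolding T_def using rR that by simp
      ultimately show ?thesis by simp
    qed
    have facefacts: "u i < 0 \<and> u j < 0 \<and> u k < 0 \<and> T \<le> exp (u i) \<and> T \<le> exp (u j) \<and> T \<le> exp (u k)
       \<and> \<delta> - 1 \<le> cos (\<Phi> {i,j}) \<and> \<delta> - 1 \<le> cos (\<Phi> {i,k}) \<and> \<delta> - 1 \<le> cos (\<Phi> {j,k})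
       \<and> 0 \<le> cos (\<Phi> {i,j}) + cos (\<Phi> {i,k}) * cos (\<Phi> {j,k})
       \<and> 0 \<le> cos (\<Phi> {i,k}) + cos (\<Phi> {i,j}) * cos (\<Phi> {j,k})
       \<and> 0 \<le> cos (\<Phi> {j,k}) + cos (\<Phi> {i,j}) * cos (\<Phi> {i,k})"
      if f: "{i,j,k} \<in> F" and d: "i \<noteq> j" "i \<noteq> k" "j \<noteq> k" for i j k
    proof -
      have V: "i \<in> V" "j \<in> V" "k \<in> V" using Fsub[OF f] by auto
      have s1: "0 \<le> cos (\<Phi> {i,k}) + cos (\<Phi> {i,j}) * cos (\<Phi> {j,k})"
        using star[of i k j] f by (simp add: insert_commute)
      have s2: "0 \<le> cos (\<Phi> {j,k}) + cos (\<Phi> {i,j}) * cos (\<Phi> {i,k})"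
        using star[of j k i] f by (simp add: insert_commute)
      show ?thesis using uv[OF V(1)] uv[OF V(2)] uv[OF V(3)] star[OF f] s1 s2
        dle_e[OF edge[OF f, of i j]] dle_e[OF edge[OF f, of i k]] dle_e[OF edge[OF f, of j k]] d
        by auto
    qed
    have partA: "\<forall>i\<in>V. cAlo \<le> A_coef F \<Phi> u i \<and> A_coef F \<Phi> u i \<le> real (card F) * cAhi"
    proof
      fix i assume iV: "i \<in> V"
      define Fi where "Fi = {f\<in>F. i \<in> f}"
      have finFi: "finite Fi" using finF by (simp add: Fi_def)
      have ex: "\<forall>f\<in>Fi. \<exists>d. ((\<lambda>s. area_u \<Phi> (u(i:=s)) f) has_real_derivative d) (at (u i)) \<and> cAlo \<le> d \<and> d \<le> cAhi"
      proof
        fix f assume "f \<in> Fi"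
        then have fF: "f \<in> F" and if': "i \<in> f" by (auto simp: Fi_def)
        obtain j k where jk: "i \<noteq> j" "i \<noteq> k" "j \<noteq> k" "f = {i,j,k}"
          using card3_obtain2[of f i] Fsub[OF fF] if' by blast
        have ff: "{i,j,k} \<in> F" using fF jk by simp
        show "\<exists>d. ((\<lambda>s. area_u \<Phi> (u(i:=s)) f) has_real_derivative d) (at (u i)) \<and> cAlo \<le> d \<and> d \<le> cAhi"
          unfolding jk(4) cAlo_def cAhi_def
          using facefacts[OF ff jk(1-3)] by (intro face_A_full[OF jk(1-3)]) (use T0 dpos dle in auto)
      qed
      then obtain D where D: "\<And>f. f \<in> Fi \<Longrightarrow> ((\<lambda>s. area_u \<Phi> (u(i:=s)) f) has_real_derivative D f) (at (u i)) \<and> cAlo \<le> D f \<and> D f \<le> cAhi"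
        by metis
      have "((\<lambda>t. \<Sum>f\<in>Fi. area_u \<Phi> (u(i:=t)) f) has_real_derivative (\<Sum>f\<in>Fi. D f)) (at (u i))"
        by (rule DERIV_sum) (use D in blast)
      then have A: "A_coef F \<Phi> u i = (\<Sum>f\<in>Fi. D f)"
        unfolding A_coef_def Fi_def[symmetric] by (rule DERIV_imp_deriv)
      obtain f0 where f0: "f0 \<in> F" "i \<in> f0" using cover[OF iV] by blast
      have f0i: "f0 \<in> Fi" using f0 by (simp add: Fi_def)
      have lo: "cAlo \<le> (\<Sum>f\<in>Fi. D f)"
      proof -
        have "D f0 \<le> (\<Sum>f\<in>Fi. D f)"
          by (rule member_le_sum[OF f0i _ finFi]) (use D cAlo in force)
        then show ?thesis using D[OF f0i] by linarith
      qed
      have "(\<Sum>f\<in>Fi. D f) \<le> real (card Fi) * cAhi"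
        by (rule sum_bounded_above) (use D in blast)
      also have "\<dots> \<le> real (card F) * cAhi"
        using card_mono[OF finF, of Fi] cAhi by (intro mult_right_mono) (auto simp: Fi_def)
      finally show "cAlo \<le> A_coef F \<Phi> u i \<and> A_coef F \<Phi> u i \<le> real (card F) * cAhi"
        using lo A by simp
    qed
    have partB: "\<forall>i j. {i, j} \<in> tri_edges F \<longrightarrow> 0 \<le> B_coef F \<Phi> u i j \<and> B_coef F \<Phi> u i j \<le> real (card F) * cB"
    proof (intro allI impI)
      fix i j assume e: "{i,j} \<in> tri_edges F"
      have ij: "i \<noteq> j" using e unfolding tri_edges_def by (auto simp: card_insert_if)
      define Fij where "Fij = {f\<in>F. {i,j} \<subseteq> f}"
      have finFij: "finite Fij" using finF by (simp add: Fij_def)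
      have each: "0 \<le> deriv (\<lambda>t. angle_u \<Phi> (u(j := t)) f i) (u j) \<and> deriv (\<lambda>t. angle_u \<Phi> (u(j := t)) f i) (u j) \<le> cB"
        if "f \<in> Fij" for f
      proof -
        have fF: "f \<in> F" and ijf: "i \<in> f" "j \<in> f" using that by (auto simp: Fij_def)
        obtain k where k: "i \<noteq> k" "j \<noteq> k" "f = {i,j,k}"
          using card3_obtain1[of f i j] Fsub[OF fF] ijf ij by blast
        have ff: "{i,j,k} \<in> F" using fF k by simp
        obtain d where d: "((\<lambda>s. angle_u \<Phi> (u(j:=s)) {i,j,k} i) has_real_derivative d) (at (u j))"
          "0 \<le> d" "d \<le> cB"
          unfolding cB_def
          using facefacts[OF ff ij k(1,2)] face_B_full[OF ij k(1,2), of u T \<delta> \<Phi>] T0 dpos dle by blast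
        have "deriv (\<lambda>t. angle_u \<Phi> (u(j := t)) f i) (u j) = d"
          unfolding k(3) by (rule DERIV_imp_deriv[OF d(1)])
        then show ?thesis using d by simp
      qed
      have B: "B_coef F \<Phi> u i j = (\<Sum>f\<in>Fij. deriv (\<lambda>t. angle_u \<Phi> (u(j := t)) f i) (u j))"
        unfolding B_coef_def Fij_def ..
      have "0 \<le> B_coef F \<Phi> u i j" unfolding B by (rule sum_nonneg) (use each in blast)
      moreover have "B_coef F \<Phi> u i j \<le> real (card Fij) * cB"
        unfolding B by (rule sum_bounded_above) (use each in blast)
      moreover have "real (card Fij) * cB \<le> real (card F) * cB"
        using card_mono[OF finF, of Fij] cBp by (intro mult_right_mono) (auto simp: Fij_def)
      ultimately show "0 \<le> B_coef F \<Phi> u i j \<and> B_coef F \<Phi> u i j \<le> real (card F) * cB" by linarith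
    qed
    show "let u = (\<lambda>w. u_of_rad (r w)) in
         (\<forall>i\<in>V. cAlo \<le> A_coef F \<Phi> u i \<and> A_coef F \<Phi> u i \<le> real (card F) * cAhi) \<and>
         (\<forall>i j. {i, j} \<in> tri_edges F \<longrightarrow> 0 \<le> B_coef F \<Phi> u i j \<and> B_coef F \<Phi> u i j \<le> real (card F) * cB)"
      unfolding Let_def u_def[symmetric] using partA partB by blast
  qed
qed


end
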